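(* Let $n\ge2$ and let $\vec v_1,\dots,\vec v_T\in[0,1]^n$ be chosen in advance by an adversary. Run Generalized FTPL over learner actions $\mathcal S_{s,m}$ with payoff $f(\vec\theta,\vec v)=\mathrm{Rev}(\vec\theta,\vec v)$, translation matrix $\Gamma^{\mathrm{SL}}$, accuracy $\epsilon=1/\sqrt T$, and $D$ uniform on $[0,1/\eta]$ with $\eta=\sqrt{(1/m)/((1+2\epsilon)T(m+1))}$. Then the auctions $\vec\theta_1,\dots,\vec\theta_T$ played satisfy \[ \mathbb E\Big[\max_{\vec\theta\in\mathcal S_{s,m}}\sum_{t=1}^T\mathrm{Rev}(\vec\theta,\vec v_t)-\sum_{t=1}^T\mathrm{Rev}(\vec\theta_t,\vec v_t)\Big]\le O(nm^2\sqrt T). \]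
   Context: $s$-level auctions: $\vec\theta$ specifies for each bidder $i$ thresholds $0\le\theta^i_0<\dots<\theta^i_{s-1}\le1$; $b_i(v_i)$ is the largest $b$ with $\theta^i_b\le v_i$ (or $-1$ if none); if all levels are $-1$ the item is unallocated, otherwise it goes to the bidder with the largest level (ties to smaller index), who pays the minimum bid with which he would still have won; $\mathrm{Rev}(\vec\theta,\vec v)\in[0,1]$ is this payment. $\mathcal S_{s,m}$: such auctions with thresholds in $\{0,1/m,\dots,1\}$. With $\vec v^{i,\ell}=\vec e_i+(\ell/m)\vec e_n$ ($1\le i\le n-1$, $0\le\ell\le m$) and $V=\{\vec v^{i,\ell}\}\cup\{\vec e_n\}$, $\Gamma^{\mathrm{SL}}_{\vec\theta,\vec v}=\mathrm{Rev}(\vec\theta,\vec v)$ for $\vec v\in V$. Generalized FTPL with $(\Gamma,D,\epsilon)$: draw $\alpha_1,\dots,\alpha_N$ i.i.d. from $D$ once; at round $t$ play any $x_t$ with $\sum_{\tau<t}f(x_t,\vec v_\tau)+\vec\alpha\cdot\Gamma_{x_t}\ge\sum_{\tau<t}f(x,\vec v_\tau)+\vec\alpha\cdot\Gamma_x-\epsilon$ for all learner actions $x$. *)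

theory Defs
  imports "HOL-Probability.Probability"
begin

text \<open>Bidders are indexed 0..n-1 (paper: 1..n); levels 0..s-1.
  An auction is \<theta> :: nat \<Rightarrow> nat \<Rightarrow> real, \<theta> i b = threshold of bidder i at level b.
  Valuation profiles are v :: nat \<Rightarrow> real (only indices < n matter).\<close>

definition grid :: "nat \<Rightarrow> real set" where
  "grid m = (\<lambda>k. real k / real m) ` {0..m}"

text \<open>The class S_{s,m} (extensional: zero outside the relevant indices, so it is finite).\<close>
definition S_sm :: "nat \<Rightarrow> nat \<Rightarrow> nat \<Rightarrow> (nat \<Rightarrow> nat \<Rightarrow> real) set" where
  "S_sm n s m = {\<theta>. (\<forall>i<n. \<forall>b<s. \<theta> i b \<in> grid m)
                  \<and> (\<forall>i<n. \<forall>b. Suc b < s \<longrightarrow> \<theta> i b < \<theta> i (Suc b))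
                  \<and> (\<forall>i b. (n \<le> i \<or> s \<le> b) \<longrightarrow> \<theta> i b = 0)}"

definition level :: "nat \<Rightarrow> (nat \<Rightarrow> nat \<Rightarrow> real) \<Rightarrow> nat \<Rightarrow> real \<Rightarrow> int" where
  "level s \<theta> i x = (if \<exists>b<s. \<theta> i b \<le> x then int (Max {b. b < s \<and> \<theta> i b \<le> x}) else -1)"

definition winner :: "nat \<Rightarrow> nat \<Rightarrow> (nat \<Rightarrow> nat \<Rightarrow> real) \<Rightarrow> (nat \<Rightarrow> real) \<Rightarrow> nat option" where
  "winner n s \<theta> v = (if \<forall>i<n. level s \<theta> i (v i) = -1 then None
     else Some (LEAST i. i < n \<and> (\<forall>j<n. level s \<theta> j (v j) \<le> level s \<theta> i (v i))))"

definition Rev :: "nat \<Rightarrow> nat \<Rightarrow> (nat \<Rightarrow> nat \<Rightarrow> real) \<Rightarrow> (nat \<Rightarrow> real) \<Rightarrow> real" where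
  "Rev n s \<theta> v = (case winner n s \<theta> v of None \<Rightarrow> 0
     | Some i \<Rightarrow> Inf {b \<in> {0..1}. winner n s \<theta> (v(i := b)) = Some i})"

definition unitvec :: "nat \<Rightarrow> nat \<Rightarrow> real" where
  "unitvec i = (\<lambda>j. if j = i then 1 else 0)"

text \<open>The set V indexing the columns of \<Gamma>^SL: v^{i,l} = e_i + (l/m) e_n (i \<le> n-1), and e_n.\<close>
definition VSL :: "nat \<Rightarrow> nat \<Rightarrow> (nat \<Rightarrow> real) set" where
  "VSL n m = {(\<lambda>j. unitvec i j + (real l / real m) * unitvec (n - 1) j) | i l. i < n - 1 \<and> l \<le> m}
             \<union> {unitvec (n - 1)}"

text \<open>\<alpha> \<cdot> \<Gamma>^SL_\<theta>, with \<alpha> indexed by the elements of V.\<close>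
definition perturb :: "nat \<Rightarrow> nat \<Rightarrow> nat \<Rightarrow> ((nat \<Rightarrow> real) \<Rightarrow> real) \<Rightarrow> (nat \<Rightarrow> nat \<Rightarrow> real) \<Rightarrow> real" where
  "perturb n s m \<alpha> \<theta> = (\<Sum>w\<in>VSL n m. \<alpha> w * Rev n s \<theta> w)"

definition ftpl_eps :: "nat \<Rightarrow> real" where
  "ftpl_eps T = 1 / sqrt (real T)"

definition ftpl_eta :: "nat \<Rightarrow> nat \<Rightarrow> real" where
  "ftpl_eta m T = sqrt ((1 / real m) / ((1 + 2 * ftpl_eps T) * real T * real (m + 1)))"

definition ftpl_D :: "nat \<Rightarrow> nat \<Rightarrow> nat \<Rightarrow> ((nat \<Rightarrow> real) \<Rightarrow> real) measure" where
  "ftpl_D n m T = PiM (VSL n m) (\<lambda>_. uniform_measure lborel {0 .. 1 / ftpl_eta m T})"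

definition ftpl_play :: "nat \<Rightarrow> nat \<Rightarrow> nat \<Rightarrow> nat \<Rightarrow> (nat \<Rightarrow> nat \<Rightarrow> real)
    \<Rightarrow> (((nat \<Rightarrow> real) \<Rightarrow> real) \<Rightarrow> nat \<Rightarrow> (nat \<Rightarrow> nat \<Rightarrow> real)) \<Rightarrow> bool" where
  "ftpl_play n s m T v play =
    (\<forall>\<alpha>\<in>space (ftpl_D n m T). \<forall>t\<in>{1..T}. play \<alpha> t \<in> S_sm n s m \<and>
       (\<forall>\<theta>\<in>S_sm n s m.
          (\<Sum>\<tau>\<in>{1..<t}. Rev n s (play \<alpha> t) (v \<tau>)) + perturb n s m \<alpha> (play \<alpha> t)
          \<ge> (\<Sum>\<tau>\<in>{1..<t}. Rev n s \<theta> (v \<tau>)) + perturb n s m \<alpha> \<theta> - ftpl_eps T))"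

definition regret :: "nat \<Rightarrow> nat \<Rightarrow> nat \<Rightarrow> nat \<Rightarrow> (nat \<Rightarrow> nat \<Rightarrow> real)
    \<Rightarrow> (nat \<Rightarrow> nat \<Rightarrow> nat \<Rightarrow> real) \<Rightarrow> real" where
  "regret n s m T v plays =
    Max ((\<lambda>\<theta>. \<Sum>t=1..T. Rev n s \<theta> (v t)) ` S_sm n s m) - (\<Sum>t=1..T. Rev n s (plays t) (v t))"

end

theory Submission
  imports Defs "HOL-Probability.Probability"
begin


lemma grid_bounds: "x \<in> grid m \<Longrightarrow> 0 \<le> x \<and> x \<le> 1"
  unfolding grid_def by (auto simp: divide_le_eq_1)

lemma grid_0: "0 \<in> grid m"
  unfolding grid_def by force

lemma grid_ex: "x \<in> grid m \<Longrightarrow> \<exists>k\<le>m. x = real k / real m"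
  unfolding grid_def by auto

lemma Ssm_mono:
  assumes "\<theta> \<in> S_sm n s m" "i < n" "b \<le> b'" "b' < s"
  shows "\<theta> i b \<le> \<theta> i b'"
  using assms(3,4)
proof (induction b' rule: dec_induct)
  case base then show ?case by simp
next
  case (step k)
  then have "\<theta> i k < \<theta> i (Suc k)" using assms(1,2) unfolding S_sm_def by auto
  then show ?case using step by auto
qed

lemma Ssm_smono:
  assumes "\<theta> \<in> S_sm n s m" "i < n" "b < b'" "b' < s"
  shows "\<theta> i b < \<theta> i b'"
proof -
  have "\<theta> i b < \<theta> i (Suc b)" using assms unfolding S_sm_def by auto
  also have "\<dots> \<le> \<theta> i b'" using Ssm_mono[OF assms(1,2)] assms by auto
  finally show ?thesis .
qed

lemma Ssm_grid: "\<theta> \<in> S_sm n s m \<Longrightarrow> i < n \<Longrightarrow> b < s \<Longrightarrow> \<theta> i b \<in> grid m"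
  unfolding S_sm_def by auto

lemma Ssm_out: "\<theta> \<in> S_sm n s m \<Longrightarrow> (n \<le> i \<or> s \<le> b) \<Longrightarrow> \<theta> i b = 0"
  unfolding S_sm_def by auto

lemma level_ge_m1: "-1 \<le> level s \<theta> i x"
  unfolding level_def by auto

lemma level_le: "level s \<theta> i x \<le> int s - 1"
proof (cases "\<exists>b<s. \<theta> i b \<le> x")
  case True
  have "finite {b. b < s \<and> \<theta> i b \<le> x}" by auto
  moreover have "{b. b < s \<and> \<theta> i b \<le> x} \<noteq> {}" using True by auto
  ultimately have "Max {b. b < s \<and> \<theta> i b \<le> x} \<in> {b. b < s \<and> \<theta> i b \<le> x}" by (rule Max_in)
  then show ?thesis using True unfolding level_def by auto
qed (auto simp: level_def)

lemma level_ge: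
  assumes "\<theta> \<in> S_sm n s m" "i < n" "b < s"
  shows "(int b \<le> level s \<theta> i x) \<longleftrightarrow> \<theta> i b \<le> x"
proof
  assume "\<theta> i b \<le> x"
  then have ex: "\<exists>b<s. \<theta> i b \<le> x" using assms by auto
  have "b \<le> Max {b. b < s \<and> \<theta> i b \<le> x}"
    by (rule Max_ge) (use \<open>\<theta> i b \<le> x\<close> assms in auto)
  then show "int b \<le> level s \<theta> i x" using ex unfolding level_def by auto
next
  assume h: "int b \<le> level s \<theta> i x"
  then have ex: "\<exists>b<s. \<theta> i b \<le> x" unfolding level_def by (auto split: if_splits)
  have "finite {b. b < s \<and> \<theta> i b \<le> x}" by auto
  moreover have "{b. b < s \<and> \<theta> i b \<le> x} \<noteq> {}" using ex by auto
  ultimately have M: "Max {b. b < s \<and> \<theta> i b \<le> x} \<in> {b. b < s \<and> \<theta> i b \<le> x}" by (rule Max_in)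
  let ?M = "Max {b. b < s \<and> \<theta> i b \<le> x}"
  have "b \<le> ?M" using h ex unfolding level_def by auto
  then have "\<theta> i b \<le> \<theta> i ?M" using Ssm_mono[OF assms(1,2)] M by auto
  then show "\<theta> i b \<le> x" using M by auto
qed

lemma int_eq_by_ge:
  fixes a c :: int
  assumes "-1 \<le> a" "a \<le> int s - 1" "-1 \<le> c" "c \<le> int s - 1"
    "\<And>b. b < s \<Longrightarrow> (int b \<le> a) = (int b \<le> c)"
  shows "a = c"
proof (rule ccontr)
  assume "a \<noteq> c"
  then consider "a < c" | "c < a" by linarith
  then show False
  proof cases
    case 1
    then have "c \<ge> 0" using assms by auto
    then have "nat c < s" "int (nat c) = c" using assms by auto
    then show False using assms(5)[of "nat c"] 1 by auto
  next
    case 2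
    then have "a \<ge> 0" using assms by auto
    then have "nat a < s" "int (nat a) = a" using assms by auto
    then show False using assms(5)[of "nat a"] 2 by auto
  qed
qed

lemma winner_Some:
  "winner n s \<theta> q = Some w \<longleftrightarrow>
    (w < n \<and> 0 \<le> level s \<theta> w (q w) \<and> (\<forall>j<w. level s \<theta> j (q j) < level s \<theta> w (q w))
       \<and> (\<forall>j<n. level s \<theta> j (q j) \<le> level s \<theta> w (q w)))"
  (is "?L \<longleftrightarrow> ?R")
proof -
  define lv where "lv j = level s \<theta> j (q j)" for j
  have lvm: "\<And>j. lv j = -1 \<or> 0 \<le> lv j" unfolding lv_def level_def by auto
  show ?thesis
  proof
    assume L: ?L
    then have nall: "\<not> (\<forall>i<n. lv i = -1)" unfolding winner_def lv_def by (auto split: if_splits)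
    then obtain k where k: "k < n" "lv k \<noteq> -1" by auto
    let ?P = "\<lambda>i. i < n \<and> (\<forall>j<n. lv j \<le> lv i)"
    define M where "M = Max (lv ` {..<n})"
    have "M \<in> lv ` {..<n}" unfolding M_def by (rule Max_in) (use k in auto)
    then obtain i0 where i0: "i0 < n" "lv i0 = M" by auto
    have "\<forall>j<n. lv j \<le> M" unfolding M_def by (auto intro: Max_ge)
    then have Pi0: "?P i0" using i0 by auto
    have w: "w = (LEAST i. ?P i)" using L nall unfolding winner_def lv_def by (auto split: if_splits)
    have Pw: "?P w" unfolding w by (rule LeastI[of ?P i0]) (rule Pi0)
    have mn: "\<And>j. j < w \<Longrightarrow> \<not> ?P j" unfolding w by (rule not_less_Least)
    have "0 \<le> lv w" using Pw k lvm[of k] lvm[of w] by force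
    moreover have "\<forall>j<w. lv j < lv w"
    proof (intro allI impI)
      fix j assume "j < w"
      then have "\<not> ?P j" "j < n" using mn Pw by auto
      then obtain k' where "k' < n" "lv j < lv k'" by force
      then show "lv j < lv w" using Pw by force
    qed
    ultimately show ?R using Pw unfolding lv_def by auto
  next
    assume R: ?R
    let ?P = "\<lambda>i. i < n \<and> (\<forall>j<n. lv j \<le> lv i)"
    have nall: "\<not> (\<forall>i<n. lv i = -1)" using R unfolding lv_def by force
    have "(LEAST i. ?P i) = w"
    proof (rule Least_equality)
      show "?P w" using R unfolding lv_def by auto
      fix y assume "?P y"
      show "w \<le> y"
      proof (rule ccontr)
        assume "\<not> w \<le> y"
        then have "lv y < lv w" using R unfolding lv_def by auto
        then show False using \<open>?P y\<close> R by force
      qed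
    qed
    then show ?L using nall unfolding winner_def lv_def by auto
  qed
qed


lemma RevF:
  assumes S: "\<theta> \<in> S_sm n s m" and W: "winner n s \<theta> p = Some w" and Ks: "K < s"
    and KC: "\<And>L::int. (0 \<le> L \<and> (\<forall>j<w. level s \<theta> j (p j) < L) \<and> (\<forall>j<n. j \<noteq> w \<longrightarrow> level s \<theta> j (p j) \<le> L))
                 \<longleftrightarrow> int K \<le> L"
  shows "Rev n s \<theta> p = \<theta> w K"
proof -
  have wn: "w < n" using W unfolding winner_Some by blast
  have set: "{b \<in> {0..1}. winner n s \<theta> (p(w := b)) = Some w} = {\<theta> w K..1}"
  proof -
    have eq: "winner n s \<theta> (p(w := b)) = Some w \<longleftrightarrow> \<theta> w K \<le> b" for b
    proof -
      have e1: "winner n s \<theta> (p(w := b)) = Some w \<longleftrightarrow>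
        (w < n \<and> 0 \<le> level s \<theta> w b \<and> (\<forall>j<w. level s \<theta> j ((p(w:=b)) j) < level s \<theta> w b)
          \<and> (\<forall>j<n. level s \<theta> j ((p(w:=b)) j) \<le> level s \<theta> w b))"
        unfolding winner_Some by simp
      have e2: "(\<forall>j<w. level s \<theta> j ((p(w:=b)) j) < level s \<theta> w b) \<longleftrightarrow> (\<forall>j<w. level s \<theta> j (p j) < level s \<theta> w b)"
        by (intro iff_allI) auto
      have e3: "(\<forall>j<n. level s \<theta> j ((p(w:=b)) j) \<le> level s \<theta> w b) \<longleftrightarrow> (\<forall>j<n. j \<noteq> w \<longrightarrow> level s \<theta> j (p j) \<le> level s \<theta> w b)"
        by (intro iff_allI) auto
      have "winner n s \<theta> (p(w := b)) = Some w \<longleftrightarrow>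
        (0 \<le> level s \<theta> w b \<and> (\<forall>j<w. level s \<theta> j (p j) < level s \<theta> w b)
          \<and> (\<forall>j<n. j \<noteq> w \<longrightarrow> level s \<theta> j (p j) \<le> level s \<theta> w b))"
        unfolding e1 e2 e3 using wn by simp
      also have "\<dots> \<longleftrightarrow> int K \<le> level s \<theta> w b" by (rule KC)
      also have "\<dots> \<longleftrightarrow> \<theta> w K \<le> b" using level_ge[OF S wn Ks] .
      finally show ?thesis .
    qed
    moreover have "0 \<le> \<theta> w K" using grid_bounds[OF Ssm_grid[OF S wn Ks]] by auto
    then show ?thesis using eq by (intro set_eqI) (simp only: mem_Collect_eq atLeastAtMost_iff, linarith)
  qed
  have le1: "\<theta> w K \<le> 1" using grid_bounds[OF Ssm_grid[OF S wn Ks]] by auto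
  have "Rev n s \<theta> p = Inf {b \<in> {0..1}. winner n s \<theta> (p(w := b)) = Some w}"
    unfolding Rev_def W by simp
  also have "\<dots> = Inf {\<theta> w K..1}" by (simp only: set)
  also have "\<dots> = \<theta> w K" using le1 by (rule cInf_atLeastAtMost)
  finally show ?thesis .
qed

lemma RevG:
  assumes S: "\<theta> \<in> S_sm n s m" and W: "winner n s \<theta> p = Some w"
  shows "\<exists>K<s. Rev n s \<theta> p = \<theta> w K"
proof -
  define lv where "lv j = level s \<theta> j (p j)" for j
  define P where "P L = (0 \<le> L \<and> (\<forall>j<w. lv j < L) \<and> (\<forall>j<n. j \<noteq> w \<longrightarrow> lv j \<le> L))" for L :: int
  have wc: "w < n" "0 \<le> lv w" "\<forall>j<w. lv j < lv w" "\<forall>j<n. lv j \<le> lv w"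
    using W unfolding winner_Some lv_def by auto
  have Pw: "P (int (nat (lv w)))" using wc unfolding P_def by auto
  define K where "K = (LEAST k. P (int k))"
  have PK: "P (int K)" unfolding K_def by (rule LeastI[of _ "nat (lv w)"]) (rule Pw)
  have Kle: "K \<le> nat (lv w)" unfolding K_def by (rule Least_le) (rule Pw)
  have "lv w \<le> int s - 1" unfolding lv_def by (rule level_le)
  then have Ks: "K < s" using Kle wc by auto
  have "P L \<longleftrightarrow> int K \<le> L" for L
  proof
    assume "P L"
    then have "L \<ge> 0" unfolding P_def by auto
    then have "P (int (nat L))" using \<open>P L\<close> by auto
    then have "K \<le> nat L" unfolding K_def by (rule Least_le)
    then show "int K \<le> L" using \<open>L \<ge> 0\<close> by auto
  next
    assume "int K \<le> L"
    then show "P L" using PK unfolding P_def by force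
  qed
  then have "Rev n s \<theta> p = \<theta> w K"
    by (intro RevF[OF S W Ks]) (simp add: P_def lv_def)
  then show ?thesis using Ks by auto
qed

lemma Rev_grid:
  assumes S: "\<theta> \<in> S_sm n s m"
  shows "Rev n s \<theta> p \<in> grid m"
proof (cases "winner n s \<theta> p")
  case None
  then show ?thesis unfolding Rev_def by (simp add: grid_0)
next
  case (Some w)
  then have "w < n" unfolding winner_Some by blast
  from RevG[OF S Some] obtain K where "K < s" "Rev n s \<theta> p = \<theta> w K" by auto
  then show ?thesis using Ssm_grid[OF S \<open>w < n\<close>] by auto
qed

lemma Rev_01: "\<theta> \<in> S_sm n s m \<Longrightarrow> 0 \<le> Rev n s \<theta> p \<and> Rev n s \<theta> p \<le> 1"
  using grid_bounds[OF Rev_grid] by blast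


definition normt :: "nat \<Rightarrow> (nat \<Rightarrow> nat \<Rightarrow> real) \<Rightarrow> (nat \<Rightarrow> nat \<Rightarrow> real)" where
  "normt n \<theta> = (\<lambda>i b. if b = 0 \<and> i < n \<and> (\<exists>j<i. \<theta> j 0 = 0) then 0 else \<theta> i b)"

lemma normt_S:
  assumes S: "\<theta> \<in> S_sm n s m"
  shows "normt n \<theta> \<in> S_sm n s m"
proof -
  have "normt n \<theta> i b < normt n \<theta> i (Suc b)" if "i < n" "Suc b < s" for i b
  proof -
    have "\<theta> i b < \<theta> i (Suc b)" using S that unfolding S_sm_def by auto
    moreover have "0 \<le> \<theta> i b" using grid_bounds[OF Ssm_grid[OF S]] that by auto
    ultimately show ?thesis unfolding normt_def by auto
  qed
  then show ?thesis using S grid_0 unfolding S_sm_def normt_def by auto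
qed

lemma level_normt:
  assumes S: "\<theta> \<in> S_sm n s m" and i: "i < n" and x: "0 \<le> x" and s: "1 \<le> s"
  shows "level s (normt n \<theta>) i x = (if \<exists>j<i. \<theta> j 0 = 0 then max (level s \<theta> i x) 0 else level s \<theta> i x)"
proof -
  have S': "normt n \<theta> \<in> S_sm n s m" by (rule normt_S[OF S])
  show ?thesis
  proof (cases "\<exists>j<i. \<theta> j 0 = 0")
    case True
    have "level s (normt n \<theta>) i x = max (level s \<theta> i x) 0"
    proof (rule int_eq_by_ge[of _ s])
      show "-1 \<le> level s (normt n \<theta>) i x" "level s (normt n \<theta>) i x \<le> int s - 1"
        by (rule level_ge_m1, rule level_le)
      show "-1 \<le> max (level s \<theta> i x) 0" by auto
      show "max (level s \<theta> i x) 0 \<le> int s - 1" using level_le[of s \<theta> i x] s by auto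
      fix b assume b: "b < s"
      show "(int b \<le> level s (normt n \<theta>) i x) = (int b \<le> max (level s \<theta> i x) 0)"
      proof (cases b)
        case 0
        have "normt n \<theta> i 0 \<le> x" using True i x unfolding normt_def by auto
        then show ?thesis using level_ge[OF S' i b] 0 by auto
      next
        case (Suc b')
        have "normt n \<theta> i b = \<theta> i b" using Suc unfolding normt_def by auto
        moreover have "(int b \<le> max (level s \<theta> i x) 0) = (int b \<le> level s \<theta> i x)" using Suc by auto
        ultimately show ?thesis using level_ge[OF S' i b, of x] level_ge[OF S i b, of x] by simp
      qed
    qed
    then show ?thesis using True by auto
  next
    case False
    then have "normt n \<theta> i = \<theta> i" unfolding normt_def by (intro ext) auto
    then show ?thesis using False unfolding level_def by auto
  qed
qed

lemma winner_normt:
  assumes S: "\<theta> \<in> S_sm n s m" and q: "\<forall>i<n. 0 \<le> q i" and s: "1 \<le> s"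
  shows "winner n s (normt n \<theta>) q = winner n s \<theta> q"
proof (cases "\<exists>j<n. \<theta> j 0 = 0")
  case False
  have "normt n \<theta> i b = \<theta> i b" for i b
  proof -
    have "\<not> (b = 0 \<and> i < n \<and> (\<exists>j<i. \<theta> j 0 = 0))"
    proof
      assume "b = 0 \<and> i < n \<and> (\<exists>j<i. \<theta> j 0 = 0)"
      then obtain j where "j < i" "i < n" "\<theta> j 0 = 0" by blast
      then show False using False by (meson less_trans)
    qed
    then show ?thesis unfolding normt_def by auto
  qed
  then have "normt n \<theta> = \<theta>" by (intro ext)
  then show ?thesis by simp
next
  case True
  define Z where "Z = (LEAST j. j < n \<and> \<theta> j 0 = 0)"
  have Z: "Z < n" "\<theta> Z 0 = 0" using LeastI_ex[OF True] unfolding Z_def by auto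
  have Zmin: "\<theta> j 0 \<noteq> 0" if "j < Z" for j
  proof -
    have "\<not> (j < n \<and> \<theta> j 0 = 0)" using that unfolding Z_def by (rule not_less_Least)
    moreover have "j < n" using that Z(1) by linarith
    ultimately show ?thesis by blast
  qed
  have ZB: "(\<exists>j<i. \<theta> j 0 = 0) \<longleftrightarrow> Z < i" if "i < n" for i
  proof
    assume "\<exists>j<i. \<theta> j 0 = 0"
    then obtain j where "j < i" "\<theta> j 0 = 0" by blast
    then have "\<not> j < Z" using Zmin by blast
    then show "Z < i" using \<open>j < i\<close> by linarith
  next
    assume "Z < i" then show "\<exists>j<i. \<theta> j 0 = 0" using Z by blast
  qed
  define lv where "lv j = level s \<theta> j (q j)" for j
  define lv' where "lv' j = level s (normt n \<theta>) j (q j)" for j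
  have lv': "lv' j = (if Z < j then max (lv j) 0 else lv j)" if "j < n" for j
  proof -
    have "lv' j = (if \<exists>k<j. \<theta> k 0 = 0 then max (lv j) 0 else lv j)"
      unfolding lv'_def lv_def using level_normt[OF S that _ s, of "q j"] q that by simp
    then show ?thesis using ZB[OF that] by simp
  qed
  have "0 < s" using s by simp
  have lvZ: "0 \<le> lv Z"
  proof -
    have "(int 0 \<le> lv Z) = (\<theta> Z 0 \<le> q Z)" unfolding lv_def by (rule level_ge[OF S Z(1) \<open>0 < s\<close>])
    moreover have "\<theta> Z 0 \<le> q Z" using Z q by simp
    ultimately show ?thesis by simp
  qed
  have eqw: "winner n s (normt n \<theta>) q = Some w \<longleftrightarrow> winner n s \<theta> q = Some w" for w
  proof -
    have "(w < n \<and> 0 \<le> lv' w \<and> (\<forall>j<w. lv' j < lv' w) \<and> (\<forall>j<n. lv' j \<le> lv' w)) \<longleftrightarrow>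
          (w < n \<and> 0 \<le> lv w \<and> (\<forall>j<w. lv j < lv w) \<and> (\<forall>j<n. lv j \<le> lv w))"
    proof
      assume h: "w < n \<and> 0 \<le> lv' w \<and> (\<forall>j<w. lv' j < lv' w) \<and> (\<forall>j<n. lv' j \<le> lv' w)"
      have eq: "lv' w = lv w"
      proof (cases "Z < w")
        case True
        then have "lv' Z < lv' w" using h by auto
        then have "1 \<le> lv' w" using lv'[of Z] Z lvZ by auto
        then show ?thesis using lv'[of w] h by auto
      next
        case False then show ?thesis using lv'[of w] h by auto
      qed
      have le: "\<And>j. j < n \<Longrightarrow> lv j \<le> lv' j" using lv' by auto
      show "w < n \<and> 0 \<le> lv w \<and> (\<forall>j<w. lv j < lv w) \<and> (\<forall>j<n. lv j \<le> lv w)"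
      proof (intro conjI allI impI)
        fix j assume "j < w"
        then have "j < n" "lv' j < lv' w" using h by auto
        then show "lv j < lv w" using le[of j] eq by linarith
      next
        fix j assume "j < n"
        then show "lv j \<le> lv w" using le[of j] eq h by force
      qed (use h eq in auto)
    next
      assume h: "w < n \<and> 0 \<le> lv w \<and> (\<forall>j<w. lv j < lv w) \<and> (\<forall>j<n. lv j \<le> lv w)"
      have eq: "lv' w = lv w" using lv'[of w] h by auto
      have pos: "Z < w \<Longrightarrow> 0 < lv w" using h lvZ by fastforce
      show "w < n \<and> 0 \<le> lv' w \<and> (\<forall>j<w. lv' j < lv' w) \<and> (\<forall>j<n. lv' j \<le> lv' w)"
      proof (intro conjI allI impI)
        fix j assume "j < w"
        then show "lv' j < lv' w" using lv'[of j] h eq pos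
          by (cases "Z < j") auto
      next
        fix j assume "j < n"
        then show "lv' j \<le> lv' w" using lv'[of j] h eq by auto
      qed (use h eq in auto)
    qed
    then show ?thesis unfolding winner_Some lv_def lv'_def .
  qed
  show ?thesis
  proof (cases "winner n s \<theta> q")
    case None
    show ?thesis
    proof (cases "winner n s (normt n \<theta>) q")
      case (Some w)
      then have "winner n s \<theta> q = Some w" using eqw[of w] by simp
      then show ?thesis using None by simp
    qed (use None in simp)
  next
    case (Some w)
    then show ?thesis using eqw[of w] by simp
  qed
qed

lemma Rev_normt:
  assumes S: "\<theta> \<in> S_sm n s m" and p: "\<forall>i<n. 0 \<le> p i" and s: "1 \<le> s"
  shows "Rev n s (normt n \<theta>) p = Rev n s \<theta> p"
proof -
  have wb: "winner n s (normt n \<theta>) (p(w:=b)) = winner n s \<theta> (p(w:=b))" if "b \<in> {0..1}" for w b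
  proof -
    have "\<forall>i<n. 0 \<le> (p(w:=b)) i" using p that by auto
    then show ?thesis by (rule winner_normt[OF S _ s])
  qed
  have "{b \<in> {0..1}. winner n s (normt n \<theta>) (p(w:=b)) = Some w}
     = {b \<in> {0..1}. winner n s \<theta> (p(w:=b)) = Some w}" for w
    using wb[of _ w] by (intro Collect_cong) auto
  moreover have "winner n s (normt n \<theta>) p = winner n s \<theta> p" by (rule winner_normt[OF S p s])
  ultimately show ?thesis unfolding Rev_def by (simp split: option.splits)
qed


lemma level_1:
  assumes S: "\<theta> \<in> S_sm n s m" and j: "j < n"
  shows "level s \<theta> j 1 = int s - 1"
proof (rule int_eq_by_ge[of _ s])
  show "-1 \<le> level s \<theta> j 1" "level s \<theta> j 1 \<le> int s - 1" by (rule level_ge_m1, rule level_le)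
  fix b assume b: "b < s"
  have "\<theta> j b \<le> 1" using grid_bounds[OF Ssm_grid[OF S j b]] by simp
  then show "(int b \<le> level s \<theta> j 1) = (int b \<le> int s - 1)" using level_ge[OF S j b, of 1] b by simp
qed (use level_le[of s \<theta> j 1] in auto)

lemma level_0:
  assumes S: "\<theta> \<in> S_sm n s m" and j: "j < n" and s: "1 \<le> s"
  shows "level s \<theta> j 0 = (if \<theta> j 0 = 0 then 0 else -1)"
proof (rule int_eq_by_ge[of _ s])
  show "-1 \<le> level s \<theta> j 0" "level s \<theta> j 0 \<le> int s - 1" by (rule level_ge_m1, rule level_le)
  show "-1 \<le> (if \<theta> j 0 = 0 then 0 else -1::int)" by simp
  show "(if \<theta> j 0 = 0 then 0 else -1::int) \<le> int s - 1" using s by simp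
  fix b assume b: "b < s"
  have g0: "0 \<le> \<theta> j 0" using grid_bounds[OF Ssm_grid[OF S j]] s by simp
  show "(int b \<le> level s \<theta> j 0) = (int b \<le> (if \<theta> j 0 = 0 then 0 else -1))"
  proof (cases b)
    case 0
    then show ?thesis using level_ge[OF S j b, of 0] g0 by auto
  next
    case (Suc b')
    then have "\<theta> j 0 < \<theta> j b" using Ssm_smono[OF S j _ b] by simp
    then show ?thesis using level_ge[OF S j b, of 0] g0 Suc by auto
  qed
qed

lemma level_s1:
  assumes S: "\<theta> \<in> S_sm n 1 m" and j: "j < n"
  shows "level 1 \<theta> j x = (if \<theta> j 0 \<le> x then 0 else -1)"
proof (rule int_eq_by_ge[of _ 1])
  show "-1 \<le> level 1 \<theta> j x" "level 1 \<theta> j x \<le> int 1 - 1" by (rule level_ge_m1, rule level_le)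
  fix b :: nat assume b: "b < 1"
  then show "(int b \<le> level 1 \<theta> j x) = (int b \<le> (if \<theta> j 0 \<le> x then 0 else -1))"
    using level_ge[OF S j b, of x] by auto
qed auto

lemma level_at:
  assumes S: "\<theta> \<in> S_sm n s m" and j: "j < n" and b: "b < s"
  shows "level s \<theta> j (\<theta> j b) = int b"
proof (rule int_eq_by_ge[of _ s])
  show "-1 \<le> level s \<theta> j (\<theta> j b)" "level s \<theta> j (\<theta> j b) \<le> int s - 1" by (rule level_ge_m1, rule level_le)
  fix b' assume b': "b' < s"
  have "\<theta> j b' \<le> \<theta> j b \<longleftrightarrow> b' \<le> b"
    using Ssm_mono[OF S j _ b] Ssm_smono[OF S j _ b'] by (meson not_le)
  then show "(int b' \<le> level s \<theta> j (\<theta> j b)) = (int b' \<le> int b)" using level_ge[OF S j b'] by simp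
qed (use b in auto)

lemma level_mono:
  assumes S: "\<theta> \<in> S_sm n s m" and j: "j < n" and xy: "x \<le> y"
  shows "level s \<theta> j x \<le> level s \<theta> j y"
proof (cases "level s \<theta> j x \<ge> 0")
  case True
  define b where "b = nat (level s \<theta> j x)"
  have bs: "b < s" using level_le[of s \<theta> j x] True unfolding b_def by auto
  have "int b \<le> level s \<theta> j x" using True unfolding b_def by simp
  then have "\<theta> j b \<le> x" using level_ge[OF S j bs] by simp
  then have "\<theta> j b \<le> y" using xy by simp
  then have "int b \<le> level s \<theta> j y" using level_ge[OF S j bs] by simp
  then show ?thesis using True unfolding b_def by simp
next
  case False
  then show ?thesis using level_ge_m1[of s \<theta> j y] level_ge_m1[of s \<theta> j x] by simp
qed

lemma colRev2:
  assumes S: "\<theta> \<in> S_sm n s m" and s: "2 \<le> s" and i: "i < n" and qi: "q i = 1"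
    and qo: "\<forall>j<n. j \<noteq> i \<and> j \<noteq> n - 1 \<longrightarrow> q j = 0"
  shows "Rev n s \<theta> q = \<theta> i (nat (max (of_bool (\<exists>j<i. \<theta> j 0 = 0))
            (if i = n - 1 then 0 else level s \<theta> (n - 1) (q (n - 1)))))"
proof -
  define lv where "lv j = level s \<theta> j (q j)" for j
  define X where "X = max (of_bool (\<exists>j<i. \<theta> j 0 = 0)) (if i = n - 1 then 0 else lv (n - 1))"
  have lvi: "lv i = int s - 1" unfolding lv_def qi by (rule level_1[OF S i])
  have lvo: "lv j = (if \<theta> j 0 = 0 then 0 else -1)" if "j < n" "j \<noteq> i" "j \<noteq> n - 1" for j
    unfolding lv_def using qo that level_0[OF S that(1)] s by simp
  have lvle: "lv j \<le> int s - 1" for j unfolding lv_def by (rule level_le)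
  have lowi: "j \<noteq> n - 1" if "j < i" for j using that i by linarith
  have W: "winner n s \<theta> q = Some i"
    unfolding winner_Some
  proof (intro conjI allI impI)
    show "i < n" by (rule i)
    show "0 \<le> level s \<theta> i (q i)" using lvi s unfolding lv_def by simp
    fix j
    show "j < i \<Longrightarrow> level s \<theta> j (q j) < level s \<theta> i (q i)"
      using lvo[of j] lowi[of j] lvi s i unfolding lv_def by (auto split: if_splits)
    show "j < n \<Longrightarrow> level s \<theta> j (q j) \<le> level s \<theta> i (q i)"
      using lvle[of j] lvi unfolding lv_def by simp
  qed
  have X0: "0 \<le> X" unfolding X_def by (simp add: le_max_iff_disj)
  have Xs: "X < int s" unfolding X_def using lvle[of "n - 1"] s by auto
  have "Rev n s \<theta> q = \<theta> i (nat X)"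
  proof (rule RevF[OF S W])
    show "nat X < s" using Xs X0 by simp
    fix L :: int
    show "(0 \<le> L \<and> (\<forall>j<i. level s \<theta> j (q j) < L) \<and> (\<forall>j<n. j \<noteq> i \<longrightarrow> level s \<theta> j (q j) \<le> L))
          \<longleftrightarrow> int (nat X) \<le> L"
    proof
      assume h: "0 \<le> L \<and> (\<forall>j<i. level s \<theta> j (q j) < L) \<and> (\<forall>j<n. j \<noteq> i \<longrightarrow> level s \<theta> j (q j) \<le> L)"
      have a: "of_bool (\<exists>j<i. \<theta> j 0 = 0) \<le> L"
      proof (cases "\<exists>j<i. \<theta> j 0 = 0")
        case True
        then obtain j where j: "j < i" "\<theta> j 0 = 0" by blast
        then have "lv j = 0" using lvo[of j] lowi[of j] i by simp
        then show ?thesis using h j True unfolding lv_def by force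
      qed (use h in auto)
      have b: "(if i = n - 1 then 0 else lv (n - 1)) \<le> L"
        using h i unfolding lv_def by auto
      show "int (nat X) \<le> L" using a b X0 unfolding X_def by simp
    next
      assume h: "int (nat X) \<le> L"
      then have hX: "X \<le> L" using X0 by simp
      then have L0: "0 \<le> L" using X0 by simp
      have "level s \<theta> j (q j) < L" if "j < i" for j
      proof -
        have "lv j = (if \<theta> j 0 = 0 then 0 else -1)" using lvo[of j] lowi[OF that] that i by simp
        moreover have "1 \<le> L" if "\<theta> j 0 = 0"
        proof -
          have "\<exists>j<i. \<theta> j 0 = 0" using that \<open>j < i\<close> by blast
          then have "(1::int) \<le> X" unfolding X_def by simp
          then show ?thesis using hX by simp
        qed
        ultimately show ?thesis using L0 unfolding lv_def by (auto split: if_splits)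
      qed
      moreover have "level s \<theta> j (q j) \<le> L" if "j < n" "j \<noteq> i" for j
      proof (cases "j = n - 1")
        case True
        then show ?thesis using hX that unfolding X_def lv_def by auto
      next
        case False
        then show ?thesis using lvo[of j] that L0 unfolding lv_def by auto
      qed
      ultimately show "0 \<le> L \<and> (\<forall>j<i. level s \<theta> j (q j) < L) \<and> (\<forall>j<n. j \<noteq> i \<longrightarrow> level s \<theta> j (q j) \<le> L)"
        using L0 by blast
    qed
  qed
  then show ?thesis unfolding X_def lv_def .
qed

lemma colRev1:
  assumes S: "\<theta> \<in> S_sm n 1 m" and i: "i < n" and qi: "q i = 1"
    and ql: "\<forall>j<i. q j = 0" and q0: "\<forall>j<n. 0 \<le> q j"
  shows "Rev n 1 \<theta> q = (if \<exists>j<i. \<theta> j 0 = 0 then 0 else \<theta> i 0)"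
proof -
  define lv where "lv j = level 1 \<theta> j (q j)" for j
  have lvf: "lv j = (if \<theta> j 0 \<le> q j then 0 else -1)" if "j < n" for j
    unfolding lv_def by (rule level_s1[OF S that])
  have lvle: "lv j \<le> 0" for j using level_le[of 1 \<theta> j "q j"] unfolding lv_def by simp
  have g: "0 \<le> \<theta> j 0 \<and> \<theta> j 0 \<le> 1" if "j < n" for j using grid_bounds[OF Ssm_grid[OF S that]] by simp
  show ?thesis
  proof (cases "\<exists>j<i. \<theta> j 0 = 0")
    case True
    define Z where "Z = (LEAST j. j < i \<and> \<theta> j 0 = 0)"
    have Z: "Z < i" "\<theta> Z 0 = 0" using LeastI_ex[OF True] unfolding Z_def by auto
    have Zmin: "\<theta> j 0 \<noteq> 0" if "j < Z" for j
    proof -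
      have "\<not> (j < i \<and> \<theta> j 0 = 0)" using that unfolding Z_def by (rule not_less_Least)
      then show ?thesis using that Z(1) by simp
    qed
    have Zn: "Z < n" using Z i by simp
    have W: "winner n 1 \<theta> q = Some Z"
      unfolding winner_Some
    proof (intro conjI allI impI)
      show "Z < n" by (rule Zn)
      have lz: "lv Z = 0" using lvf[OF Zn] Z ql by simp
      then show "0 \<le> level 1 \<theta> Z (q Z)" unfolding lv_def by simp
      fix j
      show "j < Z \<Longrightarrow> level 1 \<theta> j (q j) < level 1 \<theta> Z (q Z)"
      proof -
        assume "j < Z"
        then have "j < n" "j < i" "\<theta> j 0 \<noteq> 0" using Z Zmin Zn by auto
        then have "lv j = -1" using lvf[of j] ql g[of j] by auto
        then show ?thesis using lz unfolding lv_def by simp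
      qed
      show "j < n \<Longrightarrow> level 1 \<theta> j (q j) \<le> level 1 \<theta> Z (q Z)" using lvle[of j] lz unfolding lv_def by simp
    qed
    obtain K where "K < 1" "Rev n 1 \<theta> q = \<theta> Z K" using RevG[OF S W] by blast
    then show ?thesis using True Z by simp
  next
    case False
    have lvi: "lv i = 0" using lvf[OF i] qi g[OF i] by simp
    have lvlow: "lv j = -1" if "j < i" for j
    proof -
      have "j < n" using that i by simp
      then show ?thesis using lvf[of j] ql that False g[of j] by auto
    qed
    have W: "winner n 1 \<theta> q = Some i"
      unfolding winner_Some using i lvi lvlow lvle unfolding lv_def by auto
    have "Rev n 1 \<theta> q = \<theta> i 0"
    proof (rule RevF[OF S W])
      fix L :: int
      show "(0 \<le> L \<and> (\<forall>j<i. level 1 \<theta> j (q j) < L) \<and> (\<forall>j<n. j \<noteq> i \<longrightarrow> level 1 \<theta> j (q j) \<le> L))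
            \<longleftrightarrow> int 0 \<le> L"
      proof
        assume "int 0 \<le> L"
        then show "0 \<le> L \<and> (\<forall>j<i. level 1 \<theta> j (q j) < L) \<and> (\<forall>j<n. j \<noteq> i \<longrightarrow> level 1 \<theta> j (q j) \<le> L)"
          using lvlow lvle unfolding lv_def by (simp add: order_le_less_trans) (meson order_trans)
      qed simp
    qed simp
    then show ?thesis using False by auto
  qed
qed


definition col :: "nat \<Rightarrow> nat \<Rightarrow> nat \<Rightarrow> nat \<Rightarrow> (nat \<Rightarrow> real)" where
  "col n m i l = (\<lambda>j. unitvec i j + (real l / real m) * unitvec (n - 1) j)"

lemma col_VSL: "i < n - 1 \<Longrightarrow> l \<le> m \<Longrightarrow> col n m i l \<in> VSL n m"
  unfolding VSL_def col_def by blast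

lemma colN_VSL: "unitvec (n - 1) \<in> VSL n m"
  unfolding VSL_def by blast

lemma col_val:
  assumes "i < n - 1"
  shows "col n m i l i = 1" "col n m i l (n - 1) = real l / real m"
    "j \<noteq> i \<Longrightarrow> j \<noteq> n - 1 \<Longrightarrow> col n m i l j = 0"
  using assms unfolding col_def unitvec_def by auto

lemma Rev_col1:
  assumes S: "\<theta> \<in> S_sm n 1 m" and i: "i < n - 1" and m: "1 \<le> m" and l: "l \<le> m"
  shows "Rev n 1 \<theta> (col n m i l) = (if \<exists>j<i. \<theta> j 0 = 0 then 0 else \<theta> i 0)"
proof (rule colRev1[OF S])
  show "i < n" using i by simp
  show "col n m i l i = 1" using col_val[OF i] by simp
  show "\<forall>j<i. col n m i l j = 0" using col_val[OF i] i by auto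
  show "\<forall>j<n. 0 \<le> col n m i l j" using m unfolding col_def unitvec_def by auto
qed

lemma Rev_colN1:
  assumes S: "\<theta> \<in> S_sm n 1 m" and n: "2 \<le> n"
  shows "Rev n 1 \<theta> (unitvec (n - 1)) = (if \<exists>j<n - 1. \<theta> j 0 = 0 then 0 else \<theta> (n - 1) 0)"
  by (rule colRev1[OF S]) (use n in \<open>auto simp: unitvec_def\<close>)

lemma Rev_col2:
  assumes S: "\<theta> \<in> S_sm n s m" and s: "2 \<le> s" and i: "i < n - 1"
  shows "Rev n s \<theta> (col n m i l) = \<theta> i (nat (max (of_bool (\<exists>j<i. \<theta> j 0 = 0))
            (max 0 (level s \<theta> (n - 1) (real l / real m)))))"
proof -
  have "Rev n s \<theta> (col n m i l) = \<theta> i (nat (max (of_bool (\<exists>j<i. \<theta> j 0 = 0))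
            (if i = n - 1 then 0 else level s \<theta> (n - 1) (col n m i l (n - 1)))))"
    by (rule colRev2[OF S s]) (use i col_val[OF i] in auto)
  moreover have "max (of_bool z) (x::int) = max (of_bool z) (max 0 x)" for z x by auto
  ultimately show ?thesis using i col_val[OF i] by simp
qed

lemma Rev_colN2:
  assumes S: "\<theta> \<in> S_sm n s m" and s: "2 \<le> s" and n: "2 \<le> n"
  shows "Rev n s \<theta> (unitvec (n - 1)) = \<theta> (n - 1) (of_bool (\<exists>j<n - 1. \<theta> j 0 = 0))"
proof -
  have "Rev n s \<theta> (unitvec (n - 1)) = \<theta> (n - 1) (nat (max (of_bool (\<exists>j<n - 1. \<theta> j 0 = 0))
            (if n - 1 = n - 1 then 0 else level s \<theta> (n - 1) (unitvec (n - 1) (n - 1)))))"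
    by (rule colRev2[OF S s]) (use n in \<open>auto simp: unitvec_def\<close>)
  then show ?thesis by simp
qed

lemma level_step:
  assumes S: "\<theta> \<in> S_sm n s m" and j: "j < n" and m: "1 \<le> m"
  shows "level s \<theta> j (real (Suc l) / real m) \<le> level s \<theta> j (real l / real m) + 1"
proof (cases "level s \<theta> j (real (Suc l) / real m) \<le> 0")
  case True
  then show ?thesis using level_ge_m1[of s \<theta> j "real l / real m"] by simp
next
  case False
  define b where "b = nat (level s \<theta> j (real (Suc l) / real m))"
  have b1: "1 \<le> b" using False unfolding b_def by simp
  have bs: "b < s" using level_le[of s \<theta> j "real (Suc l) / real m"] False unfolding b_def by simp
  have ib: "int b \<le> level s \<theta> j (real (Suc l) / real m)" using False unfolding b_def by simp
  have "\<theta> j b \<le> real (Suc l) / real m" using iffD1[OF level_ge[OF S j bs] ib] .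
  moreover have "\<theta> j (b - 1) < \<theta> j b" using Ssm_smono[OF S j _ bs] b1 by simp
  moreover obtain k where k: "\<theta> j (b - 1) = real k / real m" using grid_ex[OF Ssm_grid[OF S j, of "b - 1"]] bs by (metis less_imp_diff_less)
  ultimately have "real k / real m < real (Suc l) / real m" by simp
  then have "real k < real (Suc l)" using m by (simp add: divide_less_cancel)
  then have "k \<le> l" by simp
  then have "real k / real m \<le> real l / real m" using m by (simp add: divide_right_mono)
  then have "\<theta> j (b - 1) \<le> real l / real m" using k by simp
  then have "int (b - 1) \<le> level s \<theta> j (real l / real m)" using level_ge[OF S j, of "b - 1"] bs by simp
  then show ?thesis using b1 unfolding b_def by linarith
qed


lemma Ssm_inj:
  assumes S: "\<theta> \<in> S_sm n s m" and j: "j < n" and a: "a < s" and b: "b < s" and e: "\<theta> j a = \<theta> j b"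
  shows "a = b"
proof (rule ccontr)
  assume "a \<noteq> b"
  then consider "a < b" | "b < a" by linarith
  then show False
    by cases (use Ssm_smono[OF S j _ b] Ssm_smono[OF S j _ a] e in force)+
qed

lemma ZB_Suc: "(\<exists>j<Suc i. \<theta> j 0 = 0) \<longleftrightarrow> (\<exists>j<i. \<theta> j 0 = 0) \<or> \<theta> i 0 = 0"
  by (auto simp: less_Suc_eq)

lemma GammaEq1:
  assumes S: "\<theta> \<in> S_sm n 1 m" and S': "\<theta>' \<in> S_sm n 1 m" and n: "2 \<le> n" and m: "1 \<le> m"
    and G: "\<forall>w\<in>VSL n m. Rev n 1 \<theta> w = Rev n 1 \<theta>' w"
  shows "normt n \<theta> = normt n \<theta>'"
proof (intro ext)
  fix i b
  show "normt n \<theta> i b = normt n \<theta>' i b"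
  proof (cases "i < n \<and> b = 0")
    case True
    have key: "(if \<exists>j<i. \<theta> j 0 = 0 then 0 else \<theta> i 0) = (if \<exists>j<i. \<theta>' j 0 = 0 then 0 else \<theta>' i 0)"
    proof (cases "i < n - 1")
      case True
      have "Rev n 1 \<theta> (col n m i 0) = Rev n 1 \<theta>' (col n m i 0)" using G col_VSL[OF True] by auto
      then show ?thesis using Rev_col1[OF S True m] Rev_col1[OF S' True m] by simp
    next
      case False
      then have "i = n - 1" using \<open>i < n \<and> b = 0\<close> by auto
      moreover have "Rev n 1 \<theta> (unitvec (n - 1)) = Rev n 1 \<theta>' (unitvec (n - 1))" using G colN_VSL by auto
      ultimately have "(if \<exists>j<n - 1. \<theta> j 0 = 0 then 0 else \<theta> (n - 1) 0) = (if \<exists>j<n - 1. \<theta>' j 0 = 0 then 0 else \<theta>' (n - 1) 0)"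
        using Rev_colN1[OF S n] Rev_colN1[OF S' n] by metis
      then show ?thesis using \<open>i = n - 1\<close> by (simp only:)
    qed
    have h1: "normt n \<theta> i b = (if \<exists>j<i. \<theta> j 0 = 0 then 0 else \<theta> i 0)" using True unfolding normt_def by auto
    have h2: "normt n \<theta>' i b = (if \<exists>j<i. \<theta>' j 0 = 0 then 0 else \<theta>' i 0)" using True unfolding normt_def by auto
    show ?thesis by (simp only: h1 h2 key)
  next
    case False
    then have "\<theta> i b = 0" "\<theta>' i b = 0" using Ssm_out[OF S] Ssm_out[OF S'] by auto
    then show ?thesis using False unfolding normt_def by auto
  qed
qed


lemma mu_facts:
  assumes S: "\<theta> \<in> S_sm n s m" and n: "2 \<le> n" and m: "1 \<le> m" and s: "2 \<le> s"
  shows "max 0 (level s \<theta> (n - 1) (real 0 / real m)) = 0"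
    and "\<And>l. max 0 (level s \<theta> (n - 1) (real l / real m)) \<le> max 0 (level s \<theta> (n - 1) (real (Suc l) / real m))"
    and "\<And>l. max 0 (level s \<theta> (n - 1) (real (Suc l) / real m)) \<le> max 0 (level s \<theta> (n - 1) (real l / real m)) + 1"
    and "\<And>l. max 0 (level s \<theta> (n - 1) (real l / real m)) < int s"
proof -
  have N: "n - 1 < n" using n by simp
  show "max 0 (level s \<theta> (n - 1) (real 0 / real m)) = 0" using level_0[OF S N] s by simp
  fix l
  have "real l / real m \<le> real (Suc l) / real m" using m by (simp add: divide_right_mono)
  then show "max 0 (level s \<theta> (n - 1) (real l / real m)) \<le> max 0 (level s \<theta> (n - 1) (real (Suc l) / real m))"
    using level_mono[OF S N] by (meson max.mono order_refl)
  show "max 0 (level s \<theta> (n - 1) (real (Suc l) / real m)) \<le> max 0 (level s \<theta> (n - 1) (real l / real m)) + 1"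
    using level_step[OF S N m, of l] by linarith
  show "max 0 (level s \<theta> (n - 1) (real l / real m)) < int s" using level_le[of s \<theta> "n - 1" "real l / real m"] s by simp
qed

lemma mu_eq:
  assumes S: "\<theta> \<in> S_sm n s m" and S': "\<theta>' \<in> S_sm n s m" and n: "2 \<le> n" and m: "1 \<le> m" and s: "2 \<le> s"
    and G: "\<forall>w\<in>VSL n m. Rev n s \<theta> w = Rev n s \<theta>' w"
  shows "l \<le> m \<Longrightarrow> max 0 (level s \<theta> (n - 1) (real l / real m)) = max 0 (level s \<theta>' (n - 1) (real l / real m))"
proof (induction l)
  case 0
  then show ?case using mu_facts(1)[OF S n m s] mu_facts(1)[OF S' n m s] by simp
next
  case (Suc l)
  define mu where "mu l = max 0 (level s \<theta> (n - 1) (real l / real m))" for l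
  define mu' where "mu' l = max 0 (level s \<theta>' (n - 1) (real l / real m))" for l
  have IH: "mu l = mu' l" using Suc unfolding mu_def mu'_def by simp
  have i0: "0 < n - 1" using n by simp
  have Rc: "Rev n s \<theta> (col n m 0 k) = \<theta> 0 (nat (mu k))" for k
    using Rev_col2[OF S s i0, of k] unfolding mu_def by simp
  have Rc': "Rev n s \<theta>' (col n m 0 k) = \<theta>' 0 (nat (mu' k))" for k
    using Rev_col2[OF S' s i0, of k] unfolding mu'_def by simp
  have eqk: "\<theta> 0 (nat (mu k)) = \<theta>' 0 (nat (mu' k))" if "k \<le> m" for k
    using G col_VSL[OF i0 that] Rc Rc' by metis
  have n0: "0 < n" using n by simp
  have inj: "\<theta> 0 (nat (mu a)) = \<theta> 0 (nat (mu b)) \<longleftrightarrow> mu a = mu b" for a b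
  proof
    assume h: "\<theta> 0 (nat (mu a)) = \<theta> 0 (nat (mu b))"
    have "nat (mu a) < s" "nat (mu b) < s" using mu_facts(4)[OF S n m s] unfolding mu_def by (simp_all add: nat_less_iff)
    then have "nat (mu a) = nat (mu b)" using Ssm_inj[OF S n0 _ _ h] by blast
    moreover have "0 \<le> mu a" "0 \<le> mu b" unfolding mu_def by simp_all
    ultimately show "mu a = mu b" by simp
  qed simp
  have inj': "\<theta>' 0 (nat (mu' a)) = \<theta>' 0 (nat (mu' b)) \<longleftrightarrow> mu' a = mu' b" for a b
  proof
    assume h: "\<theta>' 0 (nat (mu' a)) = \<theta>' 0 (nat (mu' b))"
    have "nat (mu' a) < s" "nat (mu' b) < s" using mu_facts(4)[OF S' n m s] unfolding mu'_def by (simp_all add: nat_less_iff)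
    then have "nat (mu' a) = nat (mu' b)" using Ssm_inj[OF S' n0 _ _ h] by blast
    moreover have "0 \<le> mu' a" "0 \<le> mu' b" unfolding mu'_def by simp_all
    ultimately show "mu' a = mu' b" by simp
  qed simp
  have "mu (Suc l) = mu l \<longleftrightarrow> mu' (Suc l) = mu' l"
    using inj[of "Suc l" l] inj'[of "Suc l" l] eqk[of "Suc l"] eqk[of l] Suc.prems by auto
  moreover have "mu l \<le> mu (Suc l)" "mu (Suc l) \<le> mu l + 1"
    using mu_facts(2,3)[OF S n m s, of l] unfolding mu_def by auto
  moreover have "mu' l \<le> mu' (Suc l)" "mu' (Suc l) \<le> mu' l + 1"
    using mu_facts(2,3)[OF S' n m s, of l] unfolding mu'_def by auto
  ultimately have "mu (Suc l) = mu' (Suc l)" using IH by linarith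
  then show ?case unfolding mu_def mu'_def .
qed


abbreviation "mu s \<theta> n m l \<equiv> max 0 (level s \<theta> (n - 1) (real l / real m))"

lemma mu_at:
  assumes S: "\<theta> \<in> S_sm n s m" and n: "2 \<le> n" and b: "b < s" and k: "\<theta> (n - 1) b = real k / real m"
  shows "mu s \<theta> n m k = int b"
proof -
  have "level s \<theta> (n - 1) (\<theta> (n - 1) b) = int b" using level_at[OF S _ b] n by simp
  then show ?thesis using k by simp
qed

lemma half2:
  assumes S: "\<theta> \<in> S_sm n s m" and S': "\<theta>' \<in> S_sm n s m" and n: "2 \<le> n" and m: "1 \<le> m" and s: "2 \<le> s"
    and G: "\<forall>w\<in>VSL n m. Rev n s \<theta> w = Rev n s \<theta>' w" and b1: "1 \<le> b" and b: "b < s"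
  shows "\<theta>' (n - 1) b \<le> \<theta> (n - 1) b"
proof -
  have N: "n - 1 < n" using n by simp
  obtain k where k: "k \<le> m" "\<theta> (n - 1) b = real k / real m" using grid_ex[OF Ssm_grid[OF S N b]] by blast
  have "mu s \<theta> n m k = int b" by (rule mu_at[OF S n b k(2)])
  then have "mu s \<theta>' n m k = int b" using mu_eq[OF S S' n m s G k(1)] by simp
  then have "int b \<le> level s \<theta>' (n - 1) (real k / real m)" using b1 by linarith
  then have "\<theta>' (n - 1) b \<le> real k / real m" using level_ge[OF S' N b] by simp
  then show ?thesis using k by simp
qed

lemma Rev_colmu:
  assumes S: "\<theta> \<in> S_sm n s m" and s: "2 \<le> s" and i: "i < n - 1"
  shows "Rev n s \<theta> (col n m i l) = \<theta> i (nat (max (of_bool (\<exists>j<i. \<theta> j 0 = 0)) (mu s \<theta> n m l)))"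
  by (rule Rev_col2[OF S s i])

lemma zb_char:
  assumes S: "\<theta> \<in> S_sm n s m" and n: "2 \<le> n" and m: "1 \<le> m" and s: "2 \<le> s" and i: "i < n - 1"
    and l1: "mu s \<theta> n m l1 = 1"
  shows "(\<exists>j<i. \<theta> j 0 = 0) \<longleftrightarrow> Rev n s \<theta> (col n m i 0) = Rev n s \<theta> (col n m i l1)"
proof -
  have in_: "i < n" using i by simp
  have "Rev n s \<theta> (col n m i 0) = \<theta> i (of_bool (\<exists>j<i. \<theta> j 0 = 0))"
    using Rev_colmu[OF S s i, of 0] mu_facts(1)[OF S n m s] by simp
  moreover have "Rev n s \<theta> (col n m i l1) = \<theta> i 1"
    using Rev_colmu[OF S s i, of l1] l1 by simp
  moreover have "\<theta> i 0 \<noteq> \<theta> i 1" using Ssm_smono[OF S in_, of 0 1] s by simp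
  ultimately show ?thesis by auto
qed

lemma GammaEq2:
  assumes S: "\<theta> \<in> S_sm n s m" and S': "\<theta>' \<in> S_sm n s m" and n: "2 \<le> n" and m: "1 \<le> m" and s: "2 \<le> s"
    and G: "\<forall>w\<in>VSL n m. Rev n s \<theta> w = Rev n s \<theta>' w"
  shows "normt n \<theta> = normt n \<theta>'"
proof -
  have G': "\<forall>w\<in>VSL n m. Rev n s \<theta>' w = Rev n s \<theta> w" using G by simp
  have N: "n - 1 < n" using n by simp
  have c2: "\<theta> (n - 1) b = \<theta>' (n - 1) b" if "1 \<le> b" "b < s" for b
    using half2[OF S S' n m s G that] half2[OF S' S n m s G' that] by simp
  have s1: "1 < s" using s by simp
  obtain l1 where l1: "l1 \<le> m" "\<theta> (n - 1) 1 = real l1 / real m" using grid_ex[OF Ssm_grid[OF S N s1]] by blast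
  have mu1: "mu s \<theta> n m l1 = 1" using mu_at[OF S n s1 l1(2)] by simp
  have mu1': "mu s \<theta>' n m l1 = 1" using mu1 mu_eq[OF S S' n m s G l1(1)] by simp
  have c3z: "(\<exists>j<i. \<theta> j 0 = 0) \<longleftrightarrow> (\<exists>j<i. \<theta>' j 0 = 0)" if i: "i < n - 1" for i
  proof -
    have "Rev n s \<theta> (col n m i 0) = Rev n s \<theta>' (col n m i 0)" using G col_VSL[OF i] by simp
    moreover have "Rev n s \<theta> (col n m i l1) = Rev n s \<theta>' (col n m i l1)" using G col_VSL[OF i l1(1)] by simp
    ultimately show ?thesis using zb_char[OF S n m s i mu1] zb_char[OF S' n m s i mu1'] by simp
  qed
  have c3: "\<theta> i b = \<theta>' i b" if i: "i < n - 1" and b: "b < s" and nz: "\<not> (b = 0 \<and> (\<exists>j<i. \<theta> j 0 = 0))" for i b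
  proof (cases "b = 0")
    case True
    then have z: "\<not> (\<exists>j<i. \<theta> j 0 = 0)" "\<not> (\<exists>j<i. \<theta>' j 0 = 0)" using nz c3z[OF i] by auto
    have "Rev n s \<theta> (col n m i 0) = Rev n s \<theta>' (col n m i 0)" using G col_VSL[OF i] by simp
    moreover have "Rev n s \<theta> (col n m i 0) = \<theta> i 0"
      using Rev_colmu[OF S s i, of 0] mu_facts(1)[OF S n m s] z by simp
    moreover have "Rev n s \<theta>' (col n m i 0) = \<theta>' i 0"
      using Rev_colmu[OF S' s i, of 0] mu_facts(1)[OF S' n m s] z by simp
    ultimately show ?thesis using True by simp
  next
    case False
    obtain k where k: "k \<le> m" "\<theta> (n - 1) b = real k / real m" using grid_ex[OF Ssm_grid[OF S N b]] by blast
    have mk: "mu s \<theta> n m k = int b" by (rule mu_at[OF S n b k(2)])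
    have mk': "mu s \<theta>' n m k = int b" using mk mu_eq[OF S S' n m s G k(1)] by simp
    have mx: "nat (max (of_bool z) (int b)) = b" for z using False by (cases z) auto
    have "Rev n s \<theta> (col n m i k) = Rev n s \<theta>' (col n m i k)" using G col_VSL[OF i k(1)] by simp
    moreover have "Rev n s \<theta> (col n m i k) = \<theta> i b" using Rev_colmu[OF S s i, of k] mk mx by simp
    moreover have "Rev n s \<theta>' (col n m i k) = \<theta>' i b" using Rev_colmu[OF S' s i, of k] mk' mx by simp
    ultimately show ?thesis by simp
  qed
  obtain N0 where N0: "n - 1 = Suc N0" using n by (cases "n - 1") auto
  have N0l: "N0 < n - 1" using N0 by simp
  have c4z: "(\<exists>j<n - 1. \<theta> j 0 = 0) \<longleftrightarrow> (\<exists>j<n - 1. \<theta>' j 0 = 0)"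
  proof -
    have "(\<exists>j<N0. \<theta> j 0 = 0) \<longleftrightarrow> (\<exists>j<N0. \<theta>' j 0 = 0)" by (rule c3z[OF N0l])
    moreover have "\<not> (\<exists>j<N0. \<theta> j 0 = 0) \<Longrightarrow> \<theta> N0 0 = \<theta>' N0 0"
      using c3[OF N0l, of 0] s by simp
    ultimately show ?thesis unfolding N0 ZB_Suc by (cases "\<exists>j<N0. \<theta> j 0 = 0") auto
  qed
  have c4: "\<theta> (n - 1) 0 = \<theta>' (n - 1) 0" if "\<not> (\<exists>j<n - 1. \<theta> j 0 = 0)"
  proof -
    have "Rev n s \<theta> (unitvec (n - 1)) = Rev n s \<theta>' (unitvec (n - 1))" using G colN_VSL by simp
    moreover have z': "\<not> (\<exists>j<n - 1. \<theta>' j 0 = 0)" using that c4z by blast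
    moreover have "Rev n s \<theta> (unitvec (n - 1)) = \<theta> (n - 1) 0" using Rev_colN2[OF S s n] that by auto
    moreover have "Rev n s \<theta>' (unitvec (n - 1)) = \<theta>' (n - 1) 0" using Rev_colN2[OF S' s n] z' by auto
    ultimately show ?thesis by simp
  qed
  show ?thesis
  proof (intro ext)
    fix i b
    show "normt n \<theta> i b = normt n \<theta>' i b"
    proof (cases "i < n \<and> b < s")
      case False
      then have "\<theta> i b = 0" "\<theta>' i b = 0" using Ssm_out[OF S] Ssm_out[OF S'] by auto
      moreover have "b \<noteq> 0 \<or> \<not> i < n" using False s by auto
      ultimately show ?thesis unfolding normt_def by auto
    next
      case True
      have zz: "(\<exists>j<i. \<theta> j 0 = 0) \<longleftrightarrow> (\<exists>j<i. \<theta>' j 0 = 0)"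
      proof (cases "i < n - 1")
        case True then show ?thesis by (rule c3z)
      next
        case False then have "i = n - 1" using \<open>i < n \<and> b < s\<close> by auto
        then show ?thesis using c4z by simp
      qed
      show ?thesis
      proof (cases "b = 0 \<and> (\<exists>j<i. \<theta> j 0 = 0)")
        case True
        then show ?thesis using zz \<open>i < n \<and> b < s\<close> unfolding normt_def by auto
      next
        case False
        then have nz': "\<not> (b = 0 \<and> (\<exists>j<i. \<theta>' j 0 = 0))" using zz by simp
        have "\<theta> i b = \<theta>' i b"
        proof (cases "i < n - 1")
          case True then show ?thesis using c3[OF True _ False] \<open>i < n \<and> b < s\<close> by simp
        next
          case iF: False then have i: "i = n - 1" using \<open>i < n \<and> b < s\<close> by auto
          show ?thesis
          proof (cases "b = 0")
            case True then show ?thesis using c4 False i by simp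
          next
            case False then show ?thesis using c2[of b] i \<open>i < n \<and> b < s\<close> by simp
          qed
        qed
        moreover have "normt n \<theta> i b = \<theta> i b" using False unfolding normt_def by auto
        moreover have "normt n \<theta>' i b = \<theta>' i b" using nz' unfolding normt_def by auto
        ultimately show ?thesis by simp
      qed
    qed
  qed
qed

lemma GammaEq:
  assumes S: "\<theta> \<in> S_sm n s m" and S': "\<theta>' \<in> S_sm n s m" and n: "2 \<le> n" and m: "1 \<le> m" and s: "1 \<le> s"
    and G: "\<forall>w\<in>VSL n m. Rev n s \<theta> w = Rev n s \<theta>' w" and p: "\<forall>i<n. 0 \<le> p i"
  shows "Rev n s \<theta> p = Rev n s \<theta>' p"
proof -
  have eq: "normt n \<theta> = normt n \<theta>'"
  proof (cases "s = 1")
    case True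
    have S1: "\<theta> \<in> S_sm n 1 m" using S True by simp
    have S1': "\<theta>' \<in> S_sm n 1 m" using S' True by simp
    have G1: "\<forall>w\<in>VSL n m. Rev n 1 \<theta> w = Rev n 1 \<theta>' w" using G True by simp
    show ?thesis by (rule GammaEq1[OF S1 S1' n m G1])
  next
    case False
    then have "2 \<le> s" using s by simp
    then show ?thesis by (rule GammaEq2[OF S S' n m _ G])
  qed
  have "Rev n s \<theta> p = Rev n s (normt n \<theta>) p" using Rev_normt[OF S p s] by simp
  also have "\<dots> = Rev n s (normt n \<theta>') p" using eq by simp
  also have "\<dots> = Rev n s \<theta>' p" using Rev_normt[OF S' p s] by simp
  finally show ?thesis .
qed


lemma sum_split_last:
  fixes g :: "nat \<Rightarrow> real"
  assumes "1 \<le> T"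
  shows "(\<Sum>t=1..T. g t) = (\<Sum>t\<in>{1..<T}. g t) + g T"
proof -
  have "{1..T} = insert T {1..<T}" using assms by auto
  then show ?thesis by (simp add: add.commute)
qed

lemma sum_split_last2:
  fixes g :: "nat \<Rightarrow> real"
  assumes "1 \<le> k"
  shows "(\<Sum>t\<in>{1..<Suc k}. g t) = (\<Sum>t\<in>{1..<k}. g t) + g k"
proof -
  have "{1..<Suc k} = insert k {1..<k}" using assms by auto
  then show ?thesis by (simp add: add.commute)
qed

lemma BTL_ind:
  fixes f :: "'a \<Rightarrow> nat \<Rightarrow> real" and P :: "'a \<Rightarrow> real" and x :: "nat \<Rightarrow> 'a"
  assumes adm: "\<forall>t\<in>{1..T}. x t \<in> S \<and> (\<forall>\<theta>\<in>S. (\<Sum>\<tau>\<in>{1..<t}. f (x t) \<tau>) + P (x t) \<ge> (\<Sum>\<tau>\<in>{1..<t}. f \<theta> \<tau>) + P \<theta> - e)"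
  shows "1 \<le> k \<Longrightarrow> k \<le> T \<Longrightarrow>
    (\<Sum>t\<in>{1..<k}. f (x (Suc t)) t) + P (x 1) \<ge> (\<Sum>\<tau>\<in>{1..<k}. f (x k) \<tau>) + P (x k) - (real k - 1) * e"
proof (induction k)
  case 0 then show ?case by simp
next
  case (Suc k)
  show ?case
  proof (cases "k = 0")
    case True then show ?thesis by simp
  next
    case False
    then have k1: "1 \<le> k" by simp
    have IH: "(\<Sum>t\<in>{1..<k}. f (x (Suc t)) t) + P (x 1) \<ge> (\<Sum>\<tau>\<in>{1..<k}. f (x k) \<tau>) + P (x k) - (real k - 1) * e"
      using Suc k1 by simp
    have kT: "k \<in> {1..T}" "Suc k \<in> {1..T}" using k1 Suc.prems by auto
    have a: "(\<Sum>\<tau>\<in>{1..<k}. f (x k) \<tau>) + P (x k) \<ge> (\<Sum>\<tau>\<in>{1..<k}. f (x (Suc k)) \<tau>) + P (x (Suc k)) - e"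
    proof -
      have "\<forall>\<theta>\<in>S. (\<Sum>\<tau>\<in>{1..<k}. f (x k) \<tau>) + P (x k) \<ge> (\<Sum>\<tau>\<in>{1..<k}. f \<theta> \<tau>) + P \<theta> - e"
        using bspec[OF adm kT(1)] by (rule conjunct2)
      moreover have "x (Suc k) \<in> S" using bspec[OF adm kT(2)] by (rule conjunct1)
      ultimately show ?thesis by (rule bspec)
    qed
    have s1: "(\<Sum>t\<in>{1..<Suc k}. f (x (Suc t)) t) = (\<Sum>t\<in>{1..<k}. f (x (Suc t)) t) + f (x (Suc k)) k"
      by (rule sum_split_last2[OF k1])
    have s2: "(\<Sum>\<tau>\<in>{1..<Suc k}. f (x (Suc k)) \<tau>) = (\<Sum>\<tau>\<in>{1..<k}. f (x (Suc k)) \<tau>) + f (x (Suc k)) k"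
      by (rule sum_split_last2[OF k1])
    show ?thesis using IH a s1 s2 by (simp add: algebra_simps)
  qed
qed

lemma BTL:
  fixes f :: "'a \<Rightarrow> nat \<Rightarrow> real" and P :: "'a \<Rightarrow> real" and x :: "nat \<Rightarrow> 'a"
  assumes adm: "\<forall>t\<in>{1..T}. x t \<in> S \<and> (\<forall>\<theta>\<in>S. (\<Sum>\<tau>\<in>{1..<t}. f (x t) \<tau>) + P (x t) \<ge> (\<Sum>\<tau>\<in>{1..<t}. f \<theta> \<tau>) + P \<theta> - e)"
    and T: "1 \<le> T" and th: "\<theta>s \<in> S"
  shows "(\<Sum>t=1..T. f \<theta>s t) - (\<Sum>t=1..T. f (x t) t) \<le>
     (\<Sum>t\<in>{1..<T}. f (x (Suc t)) t - f (x t) t) + (f \<theta>s T - f (x T) T) + (P (x 1) - P \<theta>s) + real T * e"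
proof -
  have I: "(\<Sum>t\<in>{1..<T}. f (x (Suc t)) t) + P (x 1) \<ge> (\<Sum>\<tau>\<in>{1..<T}. f (x T) \<tau>) + P (x T) - (real T - 1) * e"
    by (rule BTL_ind[OF adm T order_refl])
  have a: "(\<Sum>\<tau>\<in>{1..<T}. f (x T) \<tau>) + P (x T) \<ge> (\<Sum>\<tau>\<in>{1..<T}. f \<theta>s \<tau>) + P \<theta>s - e"
  proof -
    have "T \<in> {1..T}" using T by simp
    then have "\<forall>\<theta>\<in>S. (\<Sum>\<tau>\<in>{1..<T}. f (x T) \<tau>) + P (x T) \<ge> (\<Sum>\<tau>\<in>{1..<T}. f \<theta> \<tau>) + P \<theta> - e"
      using adm by blast
    then show ?thesis using th by (rule bspec)
  qed
  have s1: "(\<Sum>t=1..T. f \<theta>s t) = (\<Sum>t\<in>{1..<T}. f \<theta>s t) + f \<theta>s T"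
    by (rule sum_split_last[OF T])
  have s2: "(\<Sum>t=1..T. f (x t) t) = (\<Sum>t\<in>{1..<T}. f (x t) t) + f (x T) T"
    by (rule sum_split_last[OF T])
  have s3: "(\<Sum>t\<in>{1..<T}. f (x (Suc t)) t - f (x t) t) = (\<Sum>t\<in>{1..<T}. f (x (Suc t)) t) - (\<Sum>t\<in>{1..<T}. f (x t) t)"
    by (simp add: sum_subtractf)
  show ?thesis using I a s1 s2 s3 by (simp add: algebra_simps)
qed


lemma incl:
  fixes Gt f :: "'a \<Rightarrow> real"
  assumes fH: "finite SH" and fL: "finite SL"
    and xt: "\<forall>\<theta>\<in>SH \<union> SL. Gt xt \<ge> Gt \<theta> - e"
    and xs: "\<forall>\<theta>\<in>SH \<union> SL. Gt xs + f xs \<ge> Gt \<theta> + f \<theta> - e"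
    and f01: "\<forall>\<theta>\<in>SH \<union> SL. 0 \<le> f \<theta> \<and> f \<theta> \<le> 1"
    and sw: "(xt \<in> SL \<and> xs \<in> SH) \<or> (xt \<in> SH \<and> xs \<in> SL)"
  shows "-1 - e \<le> Max (Gt ` SH) - Max (Gt ` SL) \<and> Max (Gt ` SH) - Max (Gt ` SL) \<le> 1 + e"
proof -
  have neH: "SH \<noteq> {}" and neL: "SL \<noteq> {}" using sw by auto
  have "Max (Gt ` SH) \<in> Gt ` SH" using fH neH by simp
  then obtain tH where tH0: "Max (Gt ` SH) = Gt tH" "tH \<in> SH" by (rule imageE)
  then have tH: "tH \<in> SH" "Gt tH = Max (Gt ` SH)" by simp_all
  have "Max (Gt ` SL) \<in> Gt ` SL" using fL neL by simp
  then obtain tL where tL0: "Max (Gt ` SL) = Gt tL" "tL \<in> SL" by (rule imageE)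
  then have tL: "tL \<in> SL" "Gt tL = Max (Gt ` SL)" by simp_all
  have geH: "\<And>y. y \<in> SH \<Longrightarrow> Gt y \<le> Max (Gt ` SH)" using fH by auto
  have geL: "\<And>y. y \<in> SL \<Longrightarrow> Gt y \<le> Max (Gt ` SL)" using fL by auto
  from sw show ?thesis
  proof
    assume h: "xt \<in> SL \<and> xs \<in> SH"
    have 1: "Gt xt \<ge> Gt tH - e" using xt tH by blast
    have 2: "Gt xs + f xs \<ge> Gt tL + f tL - e" using xs tL by blast
    have 3: "0 \<le> f tL" "f xs \<le> 1" using f01 tL h by auto
    show ?thesis using 1 2 3 geL[of xt] geH[of xs] h tH tL by linarith
  next
    assume h: "xt \<in> SH \<and> xs \<in> SL"
    have 1: "Gt xt \<ge> Gt tL - e" using xt tL by blast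
    have 2: "Gt xs + f xs \<ge> Gt tH + f tH - e" using xs tH by blast
    have 3: "0 \<le> f tH" "f xs \<le> 1" using f01 tH h by auto
    show ?thesis using 1 2 3 geL[of xs] geH[of xt] h tH tL by linarith
  qed
qed

lemma slope:
  fixes B \<gamma> :: "'a \<Rightarrow> real"
  assumes fH: "finite SH" and neH: "SH \<noteq> {}" and fL: "finite SL" and neL: "SL \<noteq> {}"
    and gH: "\<forall>\<theta>\<in>SH. c \<le> \<gamma> \<theta>" and gL: "\<forall>\<theta>\<in>SL. \<gamma> \<theta> \<le> c - \<delta>" and aa: "a \<le> a'"
  shows "(Max ((\<lambda>\<theta>. B \<theta> + a' * \<gamma> \<theta>) ` SH) - Max ((\<lambda>\<theta>. B \<theta> + a' * \<gamma> \<theta>) ` SL))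
       - (Max ((\<lambda>\<theta>. B \<theta> + a * \<gamma> \<theta>) ` SH) - Max ((\<lambda>\<theta>. B \<theta> + a * \<gamma> \<theta>) ` SL)) \<ge> (a' - a) * \<delta>"
proof -
  let ?g = "\<lambda>b \<theta>. B \<theta> + b * \<gamma> \<theta>"
  have "Max (?g a ` SH) \<in> ?g a ` SH" using fH neH by simp
  then obtain tH where tH0: "Max (?g a ` SH) = ?g a tH" "tH \<in> SH" by (rule imageE)
  then have tH: "tH \<in> SH" "?g a tH = Max (?g a ` SH)" by simp_all
  have "Max (?g a' ` SL) \<in> ?g a' ` SL" using fL neL by simp
  then obtain tL where tL0: "Max (?g a' ` SL) = ?g a' tL" "tL \<in> SL" by (rule imageE)
  then have tL: "tL \<in> SL" "?g a' tL = Max (?g a' ` SL)" by simp_all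
  have h1: "?g a' tH \<le> Max (?g a' ` SH)" using fH tH by auto
  have h2: "?g a tL \<le> Max (?g a ` SL)" using fL tL by auto
  have "(a' - a) * c \<le> (a' - a) * \<gamma> tH" using gH tH aa by (simp add: mult_left_mono)
  moreover have "(a' - a) * \<gamma> tL \<le> (a' - a) * (c - \<delta>)" using gL tL aa by (simp add: mult_left_mono)
  ultimately show ?thesis using h1 h2 tH tL by (simp add: algebra_simps)
qed


abbreviation "UM a \<equiv> uniform_measure lborel {0..a::real}"

lemma UM_prob: "0 < a \<Longrightarrow> prob_space (UM a)"
  by (rule prob_space_uniform_measure) auto

lemma UM_AE: "0 < a \<Longrightarrow> AE y in UM a. y \<in> {0..a}"
  by (rule AE_uniform_measureI) auto

lemma PiM_AE:
  assumes V: "finite V" and a: "0 < a"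
  shows "AE \<alpha> in PiM V (\<lambda>_. UM a). \<forall>w\<in>V. \<alpha> w \<in> {0..a}"
proof (rule eventually_ball_finite[OF V], intro ballI)
  fix w assume w: "w \<in> V"
  show "AE \<alpha> in PiM V (\<lambda>_. UM a). \<alpha> w \<in> {0..a}"
    by (rule AE_PiM_component[where P = "\<lambda>y. y \<in> {0..a}"]) (use UM_prob[OF a] UM_AE[OF a] w in auto)
qed

lemma UM_interval:
  assumes a: "0 < a" and L: "0 \<le> L"
  shows "emeasure (UM a) {y0 - L..y0 + L} \<le> ennreal (2 * L / a)"
proof -
  have "emeasure (UM a) {y0 - L..y0 + L} = emeasure lborel ({0..a} \<inter> {y0 - L..y0 + L}) / emeasure lborel {0..a}"
    by (rule emeasure_uniform_measure) auto
  also have "\<dots> \<le> emeasure lborel {y0 - L..y0 + L} / emeasure lborel {0..a}"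
    by (intro divide_right_mono_ennreal emeasure_mono) auto
  also have "\<dots> = ennreal (2 * L) / ennreal a" using L a by simp
  also have "\<dots> = ennreal (2 * L / a)" using L a by (simp add: divide_ennreal)
  finally show ?thesis .
qed

lemma Fubini_bound:
  assumes V: "finite V" and w: "w \<in> V" and a: "0 < a" and L: "0 \<le> L"
    and E: "E \<in> sets (PiM V (\<lambda>_. UM a))"
    and close: "\<And>x y y0. x(w := y) \<in> E \<Longrightarrow> x(w := y0) \<in> E \<Longrightarrow> \<bar>y - y0\<bar> \<le> L"
  shows "emeasure (PiM V (\<lambda>_. UM a)) E \<le> ennreal (2 * L / a)"
proof -
  interpret P: product_prob_space "\<lambda>_. UM a" by (rule product_prob_spaceI) (rule UM_prob[OF a])
  define I where "I = V - {w}"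
  have VI: "V = insert w I" "w \<notin> I" "finite I" using w V unfolding I_def by auto
  have "emeasure (PiM V (\<lambda>_. UM a)) E = (\<integral>\<^sup>+ \<alpha>. indicator E \<alpha> \<partial>PiM V (\<lambda>_. UM a))"
    using E by simp
  also have "\<dots> = (\<integral>\<^sup>+ x. (\<integral>\<^sup>+ y. indicator E (x(w := y)) \<partial>UM a) \<partial>PiM I (\<lambda>_. UM a))"
    unfolding VI(1) by (rule P.product_nn_integral_insert[OF VI(3) VI(2)]) (use E VI in simp)
  also have "\<dots> \<le> (\<integral>\<^sup>+ x. ennreal (2 * L / a) \<partial>PiM I (\<lambda>_. UM a))"
  proof (rule nn_integral_mono)
    fix x
    show "(\<integral>\<^sup>+ y. indicator E (x(w := y)) \<partial>UM a) \<le> ennreal (2 * L / a)"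
    proof (cases "\<exists>y0. x(w := y0) \<in> E")
      case False
      then have "(\<lambda>y. indicator E (x(w := y)) :: ennreal) = (\<lambda>_. 0)" by (auto simp: indicator_def)
      then show ?thesis by simp
    next
      case True
      then obtain y0 where y0: "x(w := y0) \<in> E" by blast
      have "(\<integral>\<^sup>+ y. indicator E (x(w := y)) \<partial>UM a) \<le> (\<integral>\<^sup>+ y. indicator {y0 - L..y0 + L} y \<partial>UM a)"
      proof (rule nn_integral_mono)
        fix y
        show "indicator E (x(w := y)) \<le> (indicator {y0 - L..y0 + L} y :: ennreal)"
        proof (cases "x(w := y) \<in> E")
          case True
          then have "\<bar>y - y0\<bar> \<le> L" using close y0 by blast
          then show ?thesis by (auto simp: indicator_def abs_le_iff)
        qed simp
      qed
      also have "\<dots> = emeasure (UM a) {y0 - L..y0 + L}" by (subst nn_integral_indicator) auto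
      also have "\<dots> \<le> ennreal (2 * L / a)" by (rule UM_interval[OF a L])
      finally show ?thesis .
    qed
  qed
  also have "\<dots> = ennreal (2 * L / a)"
  proof -
    interpret Q: prob_space "PiM I (\<lambda>_. UM a)" by (rule prob_space_PiM) (rule UM_prob[OF a])
    show ?thesis by (simp add: Q.emeasure_space_1)
  qed
  finally show ?thesis .
qed


lemma finite_grid: "finite (grid m)" unfolding grid_def by simp

lemma finite_Ssm: "finite (S_sm n s m)"
proof -
  let ?F = "\<lambda>g::nat \<times> nat \<Rightarrow> real. \<lambda>i b. if i < n \<and> b < s then g (i, b) else 0"
  have "S_sm n s m \<subseteq> ?F ` (PiE ({..<n} \<times> {..<s}) (\<lambda>_. grid m))"
  proof
    fix \<theta> assume S: "\<theta> \<in> S_sm n s m"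
    let ?g = "restrict (\<lambda>(i, b). \<theta> i b) ({..<n} \<times> {..<s})"
    have "?g \<in> PiE ({..<n} \<times> {..<s}) (\<lambda>_. grid m)" using Ssm_grid[OF S] by auto
    moreover have "\<theta> = ?F ?g" using Ssm_out[OF S] by (intro ext) auto
    ultimately show "\<theta> \<in> ?F ` (PiE ({..<n} \<times> {..<s}) (\<lambda>_. grid m))" by blast
  qed
  moreover have "finite (PiE ({..<n} \<times> {..<s}) (\<lambda>_. grid m))"
    by (rule finite_PiE) (auto simp: finite_grid)
  ultimately show ?thesis using finite_subset by blast
qed

lemma VSL_eq: "VSL n m = (\<lambda>(i, l). (\<lambda>j. unitvec i j + (real l / real m) * unitvec (n - 1) j)) ` ({..<n - 1} \<times> {..m})
    \<union> {unitvec (n - 1)}"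
  unfolding VSL_def by auto

lemma finite_VSL: "finite (VSL n m)"
  unfolding VSL_eq by auto

lemma card_VSL: "card (VSL n m) \<le> (n - 1) * (m + 1) + 1"
proof -
  have "card (VSL n m) \<le> card ((\<lambda>(i, l). (\<lambda>j. unitvec i j + (real l / real m) * unitvec (n - 1) j)) ` ({..<n - 1} \<times> {..m}))
      + card {unitvec (n - 1)}"
    unfolding VSL_eq by (rule card_Un_le)
  also have "\<dots> \<le> card ({..<n - 1} \<times> {..m}) + 1"
    using card_image_le[of "{..<n - 1} \<times> {..m}" "(\<lambda>(i, l). (\<lambda>j. unitvec i j + (real l / real m) * unitvec (n - 1) j))"]
    by simp
  also have "\<dots> = (n - 1) * (m + 1) + 1" by (simp add: card_cartesian_product)
  finally show ?thesis .
qed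

lemma perturb_upd:
  assumes w: "w \<in> VSL n m"
  shows "perturb n s m (\<alpha>(w := y)) \<theta> = perturb n s m \<alpha> \<theta> + (y - \<alpha> w) * Rev n s \<theta> w"
proof -
  have f: "finite (VSL n m)" by (rule finite_VSL)
  have "perturb n s m (\<alpha>(w := y)) \<theta> = y * Rev n s \<theta> w + (\<Sum>u\<in>VSL n m - {w}. \<alpha> u * Rev n s \<theta> u)"
    unfolding perturb_def by (subst sum.remove[OF f w]) (auto intro!: sum.cong)
  moreover have "perturb n s m \<alpha> \<theta> = \<alpha> w * Rev n s \<theta> w + (\<Sum>u\<in>VSL n m - {w}. \<alpha> u * Rev n s \<theta> u)"
    unfolding perturb_def by (rule sum.remove[OF f w])
  ultimately show ?thesis by (simp add: algebra_simps)
qed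

lemma perturb_bounds:
  assumes S: "\<theta> \<in> S_sm n s m" and A: "\<forall>u\<in>VSL n m. \<alpha> u \<in> {0..a}"
  shows "0 \<le> perturb n s m \<alpha> \<theta> \<and> perturb n s m \<alpha> \<theta> \<le> real (card (VSL n m)) * a"
proof -
  have b: "0 \<le> \<alpha> u * Rev n s \<theta> u \<and> \<alpha> u * Rev n s \<theta> u \<le> a" if "u \<in> VSL n m" for u
  proof -
    have "0 \<le> Rev n s \<theta> u" "Rev n s \<theta> u \<le> 1" using Rev_01[OF S] by auto
    moreover have "0 \<le> \<alpha> u" "\<alpha> u \<le> a" using A that by auto
    moreover have "\<alpha> u * Rev n s \<theta> u \<le> \<alpha> u * 1" using calculation by (intro mult_left_mono) auto
    ultimately show ?thesis by simp
  qed
  have "0 \<le> perturb n s m \<alpha> \<theta>" unfolding perturb_def using b by (simp add: sum_nonneg)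
  moreover have "perturb n s m \<alpha> \<theta> \<le> (\<Sum>u\<in>VSL n m. a)" unfolding perturb_def using b by (intro sum_mono) auto
  ultimately show ?thesis by simp
qed


lemma grid_below:
  assumes g: "x \<in> grid m" and m: "1 \<le> m" and lt: "x < real k / real m"
  shows "x \<le> real k / real m - 1 / real m"
proof -
  obtain j where j: "x = real j / real m" using grid_ex[OF g] by blast
  then have "real j < real k" using lt m by (simp add: divide_less_cancel)
  then have "j < k" by simp
  then have "real j + 1 \<le> real k" by linarith
  then have "real j \<le> real k - 1" by linarith
  then have "real j / real m \<le> (real k - 1) / real m" using m by (simp add: divide_right_mono)
  then show ?thesis using j by (simp add: diff_divide_distrib)
qed

lemma Eprob:
  fixes n s m T :: nat and v :: "nat \<Rightarrow> nat \<Rightarrow> real"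
    and play :: "((nat \<Rightarrow> real) \<Rightarrow> real) \<Rightarrow> nat \<Rightarrow> (nat \<Rightarrow> nat \<Rightarrow> real)"
  assumes m: "1 \<le> m" and eta: "0 < ftpl_eta m T"
    and meas: "\<forall>t\<in>{1..T}. \<forall>\<theta>. {\<alpha> \<in> space (ftpl_D n m T). play \<alpha> t = \<theta>} \<in> sets (ftpl_D n m T)"
    and FP: "ftpl_play n s m T v play"
    and t1: "1 \<le> t" and tT: "t < T" and w: "w \<in> VSL n m" and k1: "1 \<le> k" and km: "k \<le> m"
    and E_def: "E = {\<alpha> \<in> space (ftpl_D n m T).
        (Rev n s (play \<alpha> t) w < real k / real m \<and> real k / real m \<le> Rev n s (play \<alpha> (Suc t)) w) \<or>
        (real k / real m \<le> Rev n s (play \<alpha> t) w \<and> Rev n s (play \<alpha> (Suc t)) w < real k / real m)}"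
  shows "E \<in> sets (ftpl_D n m T) \<and>
    emeasure (ftpl_D n m T) E \<le> ennreal (2 * (real m * (2 + 2 * ftpl_eps T)) / (1 / ftpl_eta m T))"
proof -
  define M where "M = ftpl_D n m T"
  define S where "S = S_sm n s m"
  define c where "c = real k / real m"
  define e where "e = ftpl_eps T"
  define L where "L = real m * (2 + 2 * e)"
  have e0: "0 \<le> e" unfolding e_def ftpl_eps_def by simp
  have L0: "0 \<le> L" unfolding L_def using e0 by simp
  have tS: "t \<in> {1..T}" "Suc t \<in> {1..T}" using t1 tT by auto
  have fS: "finite S" unfolding S_def by (rule finite_Ssm)
  have play_S: "play \<alpha> t' \<in> S" if "\<alpha> \<in> space M" "t' \<in> {1..T}" for \<alpha> t'
    using FP that unfolding ftpl_play_def M_def S_def by blast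
  have opt: "\<forall>\<theta>\<in>S. (\<Sum>\<tau>\<in>{1..<t'}. Rev n s (play \<alpha> t') (v \<tau>)) + perturb n s m \<alpha> (play \<alpha> t')
          \<ge> (\<Sum>\<tau>\<in>{1..<t'}. Rev n s \<theta> (v \<tau>)) + perturb n s m \<alpha> \<theta> - e"
    if "\<alpha> \<in> space M" "t' \<in> {1..T}" for \<alpha> t'
    using FP that unfolding ftpl_play_def M_def S_def e_def by blast
  define Q where "Q = (\<lambda>a b. (Rev n s a w < c \<and> c \<le> Rev n s b w) \<or> (c \<le> Rev n s a w \<and> Rev n s b w < c))"
  have Eeq: "E = (\<Union>p\<in>{p \<in> S \<times> S. Q (fst p) (snd p)}.
      {\<alpha> \<in> space M. play \<alpha> t = fst p} \<inter> {\<alpha> \<in> space M. play \<alpha> (Suc t) = snd p})"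
  proof
    show "E \<subseteq> (\<Union>p\<in>{p \<in> S \<times> S. Q (fst p) (snd p)}.
      {\<alpha> \<in> space M. play \<alpha> t = fst p} \<inter> {\<alpha> \<in> space M. play \<alpha> (Suc t) = snd p})"
    proof
      fix \<alpha> assume a: "\<alpha> \<in> E"
      then have sp: "\<alpha> \<in> space M" unfolding E_def M_def by simp
      have "Q (play \<alpha> t) (play \<alpha> (Suc t))" using a unfolding E_def Q_def c_def by simp
      moreover have "(play \<alpha> t, play \<alpha> (Suc t)) \<in> S \<times> S" using play_S[OF sp tS(1)] play_S[OF sp tS(2)] by simp
      ultimately show "\<alpha> \<in> (\<Union>p\<in>{p \<in> S \<times> S. Q (fst p) (snd p)}.
        {\<alpha> \<in> space M. play \<alpha> t = fst p} \<inter> {\<alpha> \<in> space M. play \<alpha> (Suc t) = snd p})"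
        using sp by force
    qed
  next
    show "(\<Union>p\<in>{p \<in> S \<times> S. Q (fst p) (snd p)}.
      {\<alpha> \<in> space M. play \<alpha> t = fst p} \<inter> {\<alpha> \<in> space M. play \<alpha> (Suc t) = snd p}) \<subseteq> E"
      unfolding E_def Q_def c_def M_def by auto
  qed
  have Esets: "E \<in> sets M"
    unfolding Eeq
  proof (rule sets.finite_UN)
    show "finite {p \<in> S \<times> S. Q (fst p) (snd p)}" using fS by simp
    fix p
    show "{\<alpha> \<in> space M. play \<alpha> t = fst p} \<inter> {\<alpha> \<in> space M. play \<alpha> (Suc t) = snd p} \<in> sets M"
      using meas tS unfolding M_def by blast
  qed
  have close: "\<bar>y - y0\<bar> \<le> L" if "x(w := y) \<in> E" "x(w := y0) \<in> E" for x y y0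
  proof -
    define B where "B \<theta> = (\<Sum>\<tau>\<in>{1..<t}. Rev n s \<theta> (v \<tau>)) + perturb n s m (x(w := 0)) \<theta>" for \<theta>
    define \<gamma> where "\<gamma> \<theta> = Rev n s \<theta> w" for \<theta>
    define SH where "SH = {\<theta>\<in>S. c \<le> \<gamma> \<theta>}"
    define SL where "SL = {\<theta>\<in>S. \<gamma> \<theta> < c}"
    have SHL: "SH \<union> SL = S" unfolding SH_def SL_def by auto
    have fH: "finite SH" "finite SL" using fS unfolding SH_def SL_def by auto
    have GtB: "(\<Sum>\<tau>\<in>{1..<t}. Rev n s \<theta> (v \<tau>)) + perturb n s m (x(w := y')) \<theta> = B \<theta> + y' * \<gamma> \<theta>" for \<theta> y'
    proof -
      have "perturb n s m (x(w := y')) \<theta> = perturb n s m (x(w := 0)) \<theta> + y' * Rev n s \<theta> w"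
        using perturb_upd[OF w, of s "x(w := 0)" y' \<theta>] by simp
      then show ?thesis unfolding B_def \<gamma>_def by (simp add: algebra_simps)
    qed
    define D where "D y' = Max ((\<lambda>\<theta>. B \<theta> + y' * \<gamma> \<theta>) ` SH) - Max ((\<lambda>\<theta>. B \<theta> + y' * \<gamma> \<theta>) ` SL)" for y'
    have inE: "-1 - e \<le> D y' \<and> D y' \<le> 1 + e \<and> SH \<noteq> {} \<and> SL \<noteq> {}" if yE: "x(w := y') \<in> E" for y'
    proof -
      define \<alpha> where "\<alpha> = x(w := y')"
      have sp: "\<alpha> \<in> space M" using yE unfolding \<alpha>_def E_def M_def by simp
      have xt: "play \<alpha> t \<in> S" and xs: "play \<alpha> (Suc t) \<in> S" using play_S[OF sp tS(1)] play_S[OF sp tS(2)] by auto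
      have sw: "(play \<alpha> t \<in> SL \<and> play \<alpha> (Suc t) \<in> SH) \<or> (play \<alpha> t \<in> SH \<and> play \<alpha> (Suc t) \<in> SL)"
        using yE xt xs unfolding \<alpha>_def E_def SH_def SL_def \<gamma>_def c_def by auto
      have o1: "\<forall>\<theta>\<in>SH \<union> SL. B (play \<alpha> t) + y' * \<gamma> (play \<alpha> t) \<ge> B \<theta> + y' * \<gamma> \<theta> - e"
        using opt[OF sp tS(1)] unfolding SHL \<alpha>_def GtB by simp
      have o2: "\<forall>\<theta>\<in>SH \<union> SL. (B (play \<alpha> (Suc t)) + y' * \<gamma> (play \<alpha> (Suc t))) + Rev n s (play \<alpha> (Suc t)) (v t)
              \<ge> (B \<theta> + y' * \<gamma> \<theta>) + Rev n s \<theta> (v t) - e"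
      proof
        fix \<theta> assume th: "\<theta> \<in> SH \<union> SL"
        have "(\<Sum>\<tau>\<in>{1..<Suc t}. Rev n s (play \<alpha> (Suc t)) (v \<tau>)) + perturb n s m \<alpha> (play \<alpha> (Suc t))
          \<ge> (\<Sum>\<tau>\<in>{1..<Suc t}. Rev n s \<theta> (v \<tau>)) + perturb n s m \<alpha> \<theta> - e"
          using opt[OF sp tS(2)] th unfolding SHL by blast
        then show "(B (play \<alpha> (Suc t)) + y' * \<gamma> (play \<alpha> (Suc t))) + Rev n s (play \<alpha> (Suc t)) (v t)
              \<ge> (B \<theta> + y' * \<gamma> \<theta>) + Rev n s \<theta> (v t) - e"
          unfolding sum_split_last2[OF t1] using GtB[of "play \<alpha> (Suc t)" y'] GtB[of \<theta> y'] unfolding \<alpha>_def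
          by linarith
      qed
      have f01: "\<forall>\<theta>\<in>SH \<union> SL. 0 \<le> Rev n s \<theta> (v t) \<and> Rev n s \<theta> (v t) \<le> 1"
        unfolding SHL S_def using Rev_01 by blast
      have "-1 - e \<le> D y' \<and> D y' \<le> 1 + e"
        unfolding D_def by (rule incl[OF fH o1 o2 f01 sw])
      then show ?thesis using sw by auto
    qed
    have half: "y2 - y1 \<le> L" if y12: "y1 \<le> y2" "x(w := y2) \<in> E" "x(w := y1) \<in> E" for y1 y2
    proof -
      have h2: "-1 - e \<le> D y2 \<and> D y2 \<le> 1 + e \<and> SH \<noteq> {} \<and> SL \<noteq> {}" by (rule inE[OF y12(2)])
      have h1: "-1 - e \<le> D y1 \<and> D y1 \<le> 1 + e" using inE[OF y12(3)] by blast
      have gH: "\<forall>\<theta>\<in>SH. c \<le> \<gamma> \<theta>" unfolding SH_def by simp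
      have gL: "\<forall>\<theta>\<in>SL. \<gamma> \<theta> \<le> c - 1 / real m"
      proof
        fix \<theta> assume "\<theta> \<in> SL"
        then have "\<theta> \<in> S_sm n s m" "\<gamma> \<theta> < real k / real m" unfolding SL_def S_def c_def by auto
        then show "\<gamma> \<theta> \<le> c - 1 / real m" unfolding c_def \<gamma>_def using grid_below[OF Rev_grid m] by blast
      qed
      have "D y2 - D y1 \<ge> (y2 - y1) * (1 / real m)"
        unfolding D_def by (rule slope) (use fH h2 gH gL y12 in auto)
      then have "(y2 - y1) * (1 / real m) \<le> 2 + 2 * e" using h1 h2 by linarith
      then have "(y2 - y1) \<le> (2 + 2 * e) * real m" using m by (simp add: field_simps)
      then show ?thesis unfolding L_def by (simp add: algebra_simps)
    qed
    show ?thesis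
    proof (cases "y0 \<le> y")
      case True then show ?thesis using half[OF True that] by simp
    next
      case False then show ?thesis using half[of y y0] that by simp
    qed
  qed
  have eta': "0 < 1 / ftpl_eta m T" using eta by simp
  have "emeasure (PiM (VSL n m) (\<lambda>_. UM (1 / ftpl_eta m T))) E \<le> ennreal (2 * L / (1 / ftpl_eta m T))"
    by (rule Fubini_bound[OF finite_VSL w eta' L0]) (use Esets close in \<open>auto simp: M_def ftpl_D_def\<close>)
  then show ?thesis using Esets unfolding M_def ftpl_D_def L_def e_def by simp
qed


lemma eta_facts:
  fixes m T :: nat and e :: real
  assumes m: "1 \<le> m" and T: "1 \<le> T" and e: "e = 1 / sqrt (real T)"
  defines "\<eta> \<equiv> sqrt ((1 / real m) / ((1 + 2 * e) * real T * real (m + 1)))"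
  shows "0 < \<eta>" "real T * \<eta> \<le> sqrt (real T) / real m" "1 / \<eta> \<le> 3 * real m * sqrt (real T)" "0 \<le> e" "e \<le> 1"
    "real T * e = sqrt (real T)"
proof -
  have sT: "1 \<le> sqrt (real T)" using T by simp
  show e0: "0 \<le> e" using e by simp
  show e1: "e \<le> 1" using e sT by simp
  define x where "x = (1 / real m) / ((1 + 2 * e) * real T * real (m + 1))"
  have den: "0 < (1 + 2 * e) * real T * real (m + 1)" using e0 T by simp
  have x0: "0 < x" unfolding x_def using den m by simp
  show "0 < \<eta>" unfolding \<eta>_def using x0 x_def by simp
  have "real T * \<eta> = sqrt (real T ^ 2 * x)"
  proof -
    have "sqrt (real T ^ 2 * x) = sqrt (real T ^ 2) * sqrt x" by (rule real_sqrt_mult)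
    then show ?thesis unfolding \<eta>_def x_def[symmetric] by simp
  qed
  also have "real T ^ 2 * x = real T / (real m * (1 + 2 * e) * real (m + 1))"
  proof -
    have p: "0 < 1 + 2 * e" using e0 by simp
    have "real T ^ 2 * x = real T * (real T / (real T * (real m * (1 + 2 * e) * real (m + 1))))"
      unfolding x_def by (simp add: power2_eq_square field_simps)
    also have "real T / (real T * (real m * (1 + 2 * e) * real (m + 1))) = 1 / (real m * (1 + 2 * e) * real (m + 1))"
      using T by simp
    finally show ?thesis by simp
  qed
  also have "\<dots> \<le> real T / (real m * real m)"
  proof (rule divide_left_mono)
    have "real m \<le> (1 + 2 * e) * real (m + 1)"
    proof -
      have "real m \<le> real (m + 1)" by simp
      also have "\<dots> \<le> (1 + 2 * e) * real (m + 1)" using e0 by simp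
      finally show ?thesis .
    qed
    then show "real m * real m \<le> real m * (1 + 2 * e) * real (m + 1)"
      using m by (simp add: mult.assoc mult_left_mono)
    show "0 \<le> real T" by simp
    show "0 < real m * (1 + 2 * e) * real (m + 1) * (real m * real m)" using m e0 by simp
  qed
  finally have "real T * \<eta> \<le> sqrt (real T / (real m * real m))" by (simp add: real_sqrt_le_mono)
  also have "\<dots> = sqrt (real T) / real m" by (simp add: real_sqrt_divide real_sqrt_mult)
  finally show "real T * \<eta> \<le> sqrt (real T) / real m" .
  have "1 / \<eta> = sqrt (real m * (1 + 2 * e) * real T * real (m + 1))"
  proof -
    have ix: "1 / x = real m * ((1 + 2 * e) * real T * real (m + 1))" unfolding x_def using m by simp
    have "1 / \<eta> = sqrt (1 / x)" unfolding \<eta>_def x_def[symmetric] by (simp add: real_sqrt_divide)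
    also have "\<dots> = sqrt (real m * (1 + 2 * e) * real T * real (m + 1))" unfolding ix by (simp add: mult_ac)
    finally show ?thesis .
  qed
  also have "\<dots> \<le> sqrt (9 * real m ^ 2 * real T)"
  proof (rule real_sqrt_le_mono)
    have "(1 + 2 * e) * real (m + 1) \<le> 3 * (2 * real m)" using e1 e0 m
      by (intro mult_mono) auto
    then have A: "real m * ((1 + 2 * e) * real (m + 1)) \<le> real m * (3 * (2 * real m))"
      by (rule mult_left_mono) simp
    have B: "real m * (3 * (2 * real m)) \<le> 9 * real m ^ 2"
    proof -
      have "real m * (3 * (2 * real m)) = 6 * (real m * real m)" by simp
      moreover have "9 * real m ^ 2 = 9 * (real m * real m)" by (simp add: power2_eq_square)
      moreover have "0 \<le> real m * real m" by simp
      ultimately show ?thesis by linarith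
    qed
    have C: "real m * (1 + 2 * e) * real (m + 1) = real m * ((1 + 2 * e) * real (m + 1))" by (rule mult.assoc)
    have X: "real m * (1 + 2 * e) * real (m + 1) \<le> 9 * real m ^ 2"
      unfolding C using A B by (rule order_trans)
    then show "real m * (1 + 2 * e) * real T * real (m + 1) \<le> 9 * real m ^ 2 * real T"
    proof -
      have D: "real m * (1 + 2 * e) * real T * real (m + 1) = (real m * (1 + 2 * e) * real (m + 1)) * real T"
        by (simp add: mult_ac)
      show ?thesis unfolding D by (rule mult_right_mono[OF X]) simp
    qed
  qed
  also have "\<dots> = 3 * real m * sqrt (real T)" by (simp add: real_sqrt_mult)
  finally show "1 / \<eta> \<le> 3 * real m * sqrt (real T)" .
  have "real T * e = real T / sqrt (real T)" using e by simp
  also have "\<dots> = sqrt (real T)" by (rule real_div_sqrt) simp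
  finally show "real T * e = sqrt (real T)" .
qed

lemma arith_final:
  fixes n m T :: nat and r e \<eta> a cV :: real
  assumes n: "2 \<le> n" and m: "1 \<le> m" and T: "1 \<le> T" and r: "r = sqrt (real T)"
    and e0: "0 \<le> e" and e1: "e \<le> 1" and eta: "0 < \<eta>" and Teta: "real T * \<eta> \<le> r / real m"
    and a: "a \<le> 3 * real m * r" and cV0: "0 \<le> cV" and cV: "cV \<le> 2 * real n * real m" and Te: "real T * e = r"
  shows "real (T - 1) * (cV * (real m * (2 * (real m * (2 + 2 * e)) * \<eta>))) + 1 + cV * a + real T * e
     \<le> 24 * real n * (real m)\<^sup>2 * r"
proof -
  have r1: "1 \<le> r" using r T by simp
  have m1: "1 \<le> real m" using m by simp
  have n1: "1 \<le> real n" using n by simp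
  have nm: "1 \<le> real n * (real m)\<^sup>2" using n1 m1
    by (metis le_square mult_mono' one_le_power power2_eq_square zero_le_one mult_1)
  have t1: "real (T - 1) * (cV * (real m * (2 * (real m * (2 + 2 * e)) * \<eta>)))
      \<le> 8 * cV * (real m)\<^sup>2 * (real T * \<eta>)"
  proof -
    have "real (T - 1) \<le> real T" by simp
    moreover have "0 \<le> cV * (real m * (2 * (real m * (2 + 2 * e)) * \<eta>))" using cV0 e0 eta by simp
    ultimately have "real (T - 1) * (cV * (real m * (2 * (real m * (2 + 2 * e)) * \<eta>)))
        \<le> real T * (cV * (real m * (2 * (real m * (2 + 2 * e)) * \<eta>)))" by (rule mult_right_mono)
    also have "\<dots> = 2 * (2 + 2 * e) * cV * (real m)\<^sup>2 * (real T * \<eta>)" by (simp add: power2_eq_square algebra_simps)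
    also have "\<dots> \<le> 8 * cV * (real m)\<^sup>2 * (real T * \<eta>)"
    proof -
      have "2 * (2 + 2 * e) \<le> 8" using e1 by simp
      moreover have "0 \<le> cV * (real m)\<^sup>2 * (real T * \<eta>)" using cV0 eta by simp
      ultimately show ?thesis using mult_right_mono[of "2 * (2 + 2 * e)" 8 "cV * (real m)\<^sup>2 * (real T * \<eta>)"]
        by (simp add: algebra_simps)
    qed
    finally show ?thesis .
  qed
  have t1b: "8 * cV * (real m)\<^sup>2 * (real T * \<eta>) \<le> 16 * real n * (real m)\<^sup>2 * r"
  proof -
    have "8 * cV * (real m)\<^sup>2 * (real T * \<eta>) \<le> 8 * cV * (real m)\<^sup>2 * (r / real m)"
      using Teta cV0 by (intro mult_left_mono) auto
    also have "\<dots> = 8 * cV * real m * r" using m1 by (simp add: power2_eq_square)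
    also have "\<dots> = cV * (8 * real m * r)" by simp
    also have "\<dots> \<le> (2 * real n * real m) * (8 * real m * r)" by (rule mult_right_mono[OF cV]) (use r1 m1 in simp)
    also have "\<dots> = 16 * real n * (real m)\<^sup>2 * r" by (simp add: power2_eq_square)
    finally show ?thesis .
  qed
  have t3: "cV * a \<le> 6 * real n * (real m)\<^sup>2 * r"
  proof -
    have "cV * a \<le> cV * (3 * real m * r)" using a cV0 by (rule mult_left_mono)
    also have "\<dots> \<le> (2 * real n * real m) * (3 * real m * r)" by (rule mult_right_mono[OF cV]) (use r1 m1 in simp)
    also have "\<dots> = 6 * real n * (real m)\<^sup>2 * r" by (simp add: power2_eq_square)
    finally show ?thesis .
  qed
  have t2: "1 \<le> real n * (real m)\<^sup>2 * r" using nm r1 by (metis mult_mono' mult_1 zero_le_one)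
  have t4: "r \<le> real n * (real m)\<^sup>2 * r" using nm r1 by simp
  show ?thesis using t1 t1b t2 t3 t4 Te by linarith
qed


definition Ev :: "nat \<Rightarrow> nat \<Rightarrow> nat \<Rightarrow> nat \<Rightarrow> (((nat \<Rightarrow> real) \<Rightarrow> real) \<Rightarrow> nat \<Rightarrow> (nat \<Rightarrow> nat \<Rightarrow> real))
   \<Rightarrow> nat \<Rightarrow> (nat \<Rightarrow> real) \<Rightarrow> nat \<Rightarrow> ((nat \<Rightarrow> real) \<Rightarrow> real) set" where
  "Ev n s m T play t w k = {\<alpha> \<in> space (ftpl_D n m T).
        (Rev n s (play \<alpha> t) w < real k / real m \<and> real k / real m \<le> Rev n s (play \<alpha> (Suc t)) w) \<or>
        (real k / real m \<le> Rev n s (play \<alpha> t) w \<and> Rev n s (play \<alpha> (Suc t)) w < real k / real m)}"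

lemma step_bound:
  assumes n: "2 \<le> n" and s: "1 \<le> s" and m: "1 \<le> m"
    and x1: "\<theta>1 \<in> S_sm n s m" and x2: "\<theta>2 \<in> S_sm n s m"
    and p: "\<forall>i<n. 0 \<le> p i"
    and ev: "\<And>w k. w \<in> VSL n m \<Longrightarrow> 1 \<le> k \<Longrightarrow> k \<le> m \<Longrightarrow>
       ((Rev n s \<theta>1 w < real k / real m \<and> real k / real m \<le> Rev n s \<theta>2 w) \<or>
        (real k / real m \<le> Rev n s \<theta>1 w \<and> Rev n s \<theta>2 w < real k / real m)) \<Longrightarrow> \<alpha> \<in> E w k"
  shows "Rev n s \<theta>2 p - Rev n s \<theta>1 p \<le> (\<Sum>w\<in>VSL n m. \<Sum>k\<in>{1..m}. indicator (E w k) \<alpha>)"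
proof (cases "\<forall>w\<in>VSL n m. Rev n s \<theta>1 w = Rev n s \<theta>2 w")
  case True
  then have "Rev n s \<theta>1 p = Rev n s \<theta>2 p" by (rule GammaEq[OF x1 x2 n m s _ p])
  moreover have "0 \<le> (\<Sum>w\<in>VSL n m. \<Sum>k\<in>{1..m}. indicator (E w k) \<alpha> :: real)"
    by (intro sum_nonneg) auto
  ultimately show ?thesis by simp
next
  case False
  then obtain w0 where w0: "w0 \<in> VSL n m" "Rev n s \<theta>1 w0 \<noteq> Rev n s \<theta>2 w0" by blast
  obtain j1 where j1: "j1 \<le> m" "Rev n s \<theta>1 w0 = real j1 / real m" using grid_ex[OF Rev_grid[OF x1]] by blast
  obtain j2 where j2: "j2 \<le> m" "Rev n s \<theta>2 w0 = real j2 / real m" using grid_ex[OF Rev_grid[OF x2]] by blast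
  have m0: "0 < real m" using m by simp
  have "\<exists>k0. 1 \<le> k0 \<and> k0 \<le> m \<and> \<alpha> \<in> E w0 k0"
  proof (cases "j1 < j2")
    case True
    have "real j1 / real m < real j2 / real m" using True m0 by (simp add: divide_strict_right_mono)
    then have "\<alpha> \<in> E w0 j2" using ev[OF w0(1), of j2] True j1 j2 by simp
    then show ?thesis using True j2 by (intro exI[of _ j2]) auto
  next
    case False
    then have "j2 < j1" using w0(2) j1 j2 by (metis linorder_neqE_nat)
    then have "real j2 / real m < real j1 / real m" using m0 by (simp add: divide_strict_right_mono)
    then have "\<alpha> \<in> E w0 j1" using ev[OF w0(1), of j1] \<open>j2 < j1\<close> j1 j2 by simp
    then show ?thesis using \<open>j2 < j1\<close> j1 by (intro exI[of _ j1]) auto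
  qed
  then obtain k0 where k0: "1 \<le> k0" "k0 \<le> m" "\<alpha> \<in> E w0 k0" by blast
  have "Rev n s \<theta>2 p - Rev n s \<theta>1 p \<le> 1" using Rev_01[OF x1] Rev_01[OF x2] by (smt (verit))
  also have "(1::real) = indicator (E w0 k0) \<alpha>" using k0 by simp
  also have "\<dots> \<le> (\<Sum>k\<in>{1..m}. indicator (E w0 k) \<alpha>)"
    by (rule member_le_sum) (use k0 in auto)
  also have "\<dots> \<le> (\<Sum>w\<in>VSL n m. \<Sum>k\<in>{1..m}. indicator (E w k) \<alpha>)"
    by (rule member_le_sum[OF w0(1)]) (auto intro: sum_nonneg simp: finite_VSL)
  finally show ?thesis .
qed

lemma pointwise:
  assumes n: "2 \<le> n" and s: "1 \<le> s" and m: "1 \<le> m" and T: "1 \<le> T"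
    and vb: "\<forall>t\<in>{1..T}. \<forall>i<n. v t i \<in> {0..1}"
    and FP: "ftpl_play n s m T v play"
    and sp: "\<alpha> \<in> space (ftpl_D n m T)"
    and box: "\<forall>u\<in>VSL n m. \<alpha> u \<in> {0..a}"
  shows "regret n s m T v (play \<alpha>) \<le> (\<Sum>t\<in>{1..<T}. \<Sum>w\<in>VSL n m. \<Sum>k\<in>{1..m}. indicator (Ev n s m T play t w k) \<alpha>)
     + 1 + real (card (VSL n m)) * a + real T * ftpl_eps T"
proof -
  define S where "S = S_sm n s m"
  define F where "F \<theta> = (\<Sum>t=1..T. Rev n s \<theta> (v t))" for \<theta>
  have adm: "\<forall>t\<in>{1..T}. play \<alpha> t \<in> S \<and> (\<forall>\<theta>\<in>S. (\<Sum>\<tau>\<in>{1..<t}. Rev n s (play \<alpha> t) (v \<tau>)) + perturb n s m \<alpha> (play \<alpha> t)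
          \<ge> (\<Sum>\<tau>\<in>{1..<t}. Rev n s \<theta> (v \<tau>)) + perturb n s m \<alpha> \<theta> - ftpl_eps T)"
    using FP sp unfolding ftpl_play_def S_def by blast
  have fS: "finite S" unfolding S_def by (rule finite_Ssm)
  have x1: "play \<alpha> 1 \<in> S" using adm T by auto
  have "Max (F ` S) \<in> F ` S" using fS x1 by (intro Max_in) auto
  then obtain ts where ts: "ts \<in> S" "Max (F ` S) = F ts" by (rule imageE) simp
  have R: "regret n s m T v (play \<alpha>) = F ts - (\<Sum>t=1..T. Rev n s (play \<alpha> t) (v t))"
    unfolding regret_def using ts unfolding F_def S_def by simp
  have B: "F ts - (\<Sum>t=1..T. Rev n s (play \<alpha> t) (v t)) \<le>
     (\<Sum>t\<in>{1..<T}. Rev n s (play \<alpha> (Suc t)) (v t) - Rev n s (play \<alpha> t) (v t))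
     + (Rev n s ts (v T) - Rev n s (play \<alpha> T) (v T)) + (perturb n s m \<alpha> (play \<alpha> 1) - perturb n s m \<alpha> ts)
     + real T * ftpl_eps T"
    unfolding F_def by (rule BTL[OF adm T ts(1)])
  have xT: "play \<alpha> T \<in> S" using adm T by auto
  have b1: "Rev n s ts (v T) - Rev n s (play \<alpha> T) (v T) \<le> 1"
    using Rev_01[of ts n s m] Rev_01[of "play \<alpha> T" n s m] ts xT unfolding S_def by (smt (verit))
  have b2: "perturb n s m \<alpha> (play \<alpha> 1) - perturb n s m \<alpha> ts \<le> real (card (VSL n m)) * a"
    using perturb_bounds[OF _ box, of "play \<alpha> 1" s] perturb_bounds[OF _ box, of ts s] x1 ts unfolding S_def
    by (smt (verit))
  have b3: "(\<Sum>t\<in>{1..<T}. Rev n s (play \<alpha> (Suc t)) (v t) - Rev n s (play \<alpha> t) (v t))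
      \<le> (\<Sum>t\<in>{1..<T}. \<Sum>w\<in>VSL n m. \<Sum>k\<in>{1..m}. indicator (Ev n s m T play t w k) \<alpha>)"
  proof (rule sum_mono)
    fix t assume t: "t \<in> {1..<T}"
    then have tt: "t \<in> {1..T}" "Suc t \<in> {1..T}" by auto
    have p1: "play \<alpha> t \<in> S_sm n s m" "play \<alpha> (Suc t) \<in> S_sm n s m" using adm tt unfolding S_def by auto
    have p: "\<forall>i<n. 0 \<le> v t i" using vb tt by auto
    show "Rev n s (play \<alpha> (Suc t)) (v t) - Rev n s (play \<alpha> t) (v t)
      \<le> (\<Sum>w\<in>VSL n m. \<Sum>k\<in>{1..m}. indicator (Ev n s m T play t w k) \<alpha>)"
      by (rule step_bound[OF n s m p1 p]) (use sp in \<open>auto simp: Ev_def\<close>)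
  qed
  show ?thesis using R B b1 b2 b3 by linarith
qed

lemma card_VSL_le: "2 \<le> n \<Longrightarrow> 1 \<le> m \<Longrightarrow> real (card (VSL n m)) \<le> 2 * real n * real m"
proof -
  assume n: "2 \<le> n" and m: "1 \<le> m"
  have a: "(n - 1) * (m + 1) + 1 \<le> n * (m + 1)" using n by (cases n) auto
  have b: "n * (m + 1) \<le> 2 * n * m"
  proof -
    have "n \<le> n * m" using m by simp
    then show ?thesis by (simp add: algebra_simps)
  qed
  have "card (VSL n m) \<le> 2 * n * m" using card_VSL[of n m] a b by linarith
  then have "real (card (VSL n m)) \<le> real (2 * n * m)" by (simp only: of_nat_le_iff)
  then show ?thesis by simp
qed

lemma main_bound:
  assumes n: "2 \<le> n" and s: "1 \<le> s" and m: "1 \<le> m" and T: "1 \<le> T"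
    and vb: "\<forall>t\<in>{1..T}. \<forall>i<n. v t i \<in> {0..1}"
    and meas: "\<forall>t\<in>{1..T}. \<forall>\<theta>. {\<alpha> \<in> space (ftpl_D n m T). play \<alpha> t = \<theta>} \<in> sets (ftpl_D n m T)"
    and FP: "ftpl_play n s m T v play"
  shows "(\<integral>\<alpha>. regret n s m T v (play \<alpha>) \<partial>ftpl_D n m T) \<le> 24 * real n * (real m)\<^sup>2 * sqrt (real T)"
proof -
  define M where "M = ftpl_D n m T"
  define \<eta> where "\<eta> = ftpl_eta m T"
  define e where "e = ftpl_eps T"
  define a where "a = 1 / \<eta>"
  define V where "V = VSL n m"
  define cV where "cV = real (card V)"
  define C0 where "C0 = 1 + cV * a + real T * e"
  define b where "b = 2 * (real m * (2 + 2 * e)) / (1 / \<eta>)"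
  have ef: "0 < \<eta>" "real T * \<eta> \<le> sqrt (real T) / real m" "1 / \<eta> \<le> 3 * real m * sqrt (real T)" "0 \<le> e" "e \<le> 1"
    "real T * e = sqrt (real T)"
    using eta_facts[OF m T, of e] unfolding \<eta>_def e_def ftpl_eta_def ftpl_eps_def by auto
  have a0: "0 < a" unfolding a_def using ef by simp
  have Mdef: "M = PiM V (\<lambda>_. UM a)" unfolding M_def ftpl_D_def V_def a_def \<eta>_def by simp
  interpret P: prob_space M unfolding Mdef by (rule prob_space_PiM) (rule UM_prob[OF a0])
  have fV: "finite V" unfolding V_def by (rule finite_VSL)
  have Esets: "Ev n s m T play t w k \<in> sets M" and Emeas: "measure M (Ev n s m T play t w k) \<le> b"
    if "t \<in> {1..<T}" "w \<in> V" "k \<in> {1..m}" for t w k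
  proof -
    have h: "Ev n s m T play t w k \<in> sets M \<and> emeasure M (Ev n s m T play t w k) \<le> ennreal b"
      unfolding M_def b_def e_def \<eta>_def
      by (rule Eprob[OF m _ meas FP]) (use that ef in \<open>auto simp: V_def \<eta>_def Ev_def\<close>)
    then show "Ev n s m T play t w k \<in> sets M" by simp
    have b0: "0 \<le> b" unfolding b_def using ef by simp
    have "ennreal (measure M (Ev n s m T play t w k)) \<le> ennreal b"
      using h P.emeasure_eq_measure by simp
    then show "measure M (Ev n s m T play t w k) \<le> b" using b0 by (simp add: ennreal_le_iff)
  qed
  define R where "R \<alpha> = (\<Sum>t\<in>{1..<T}. \<Sum>w\<in>V. \<Sum>k\<in>{1..m}. indicator (Ev n s m T play t w k) \<alpha>) + C0" for \<alpha> :: "(nat \<Rightarrow> real) \<Rightarrow> real"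
  have intI: "integrable M (indicator (Ev n s m T play t w k) :: _ \<Rightarrow> real)"
    if "t \<in> {1..<T}" "w \<in> V" "k \<in> {1..m}" for t w k
    using Esets[OF that] by (intro integrable_real_indicator) (auto simp: less_top[symmetric])
  have i1: "integrable M (\<lambda>\<alpha>. \<Sum>t\<in>{1..<T}. \<Sum>w\<in>V. \<Sum>k\<in>{1..m}. indicator (Ev n s m T play t w k) \<alpha> :: real)"
  proof (rule Bochner_Integration.integrable_sum)
    fix t assume t: "t \<in> {1..<T}"
    show "integrable M (\<lambda>\<alpha>. \<Sum>w\<in>V. \<Sum>k\<in>{1..m}. indicator (Ev n s m T play t w k) \<alpha> :: real)"
    proof (rule Bochner_Integration.integrable_sum)
      fix w assume w: "w \<in> V"
      show "integrable M (\<lambda>\<alpha>. \<Sum>k\<in>{1..m}. indicator (Ev n s m T play t w k) \<alpha> :: real)"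
      proof (rule Bochner_Integration.integrable_sum)
        fix k assume k: "k \<in> {1..m}"
        show "integrable M (\<lambda>\<alpha>. indicator (Ev n s m T play t w k) \<alpha> :: real)" using intI[OF t w k] by simp
      qed
    qed
  qed
  have i2: "integrable M (\<lambda>_. C0)" by (rule P.integrable_const)
  have intR: "integrable M R" unfolding R_def by (rule Bochner_Integration.integrable_add[OF i1 i2])
  have AEbox: "AE \<alpha> in M. \<forall>u\<in>V. \<alpha> u \<in> {0..a}" unfolding Mdef by (rule PiM_AE[OF fV a0])
  have le: "AE \<alpha> in M. regret n s m T v (play \<alpha>) \<le> R \<alpha>"
    using AEbox AE_space
  proof eventually_elim
    case (elim \<alpha>)
    have "regret n s m T v (play \<alpha>) \<le> (\<Sum>t\<in>{1..<T}. \<Sum>w\<in>VSL n m. \<Sum>k\<in>{1..m}. indicator (Ev n s m T play t w k) \<alpha>)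
     + 1 + real (card (VSL n m)) * a + real T * ftpl_eps T"
      by (rule pointwise[OF n s m T vb FP]) (use elim in \<open>auto simp: M_def V_def\<close>)
    then show ?case unfolding R_def C0_def cV_def V_def e_def by simp
  qed
  have nn: "AE \<alpha> in M. 0 \<le> R \<alpha>"
  proof -
    have "0 \<le> C0" unfolding C0_def cV_def using a0 ef by simp
    then show ?thesis unfolding R_def by (intro AE_I2 add_nonneg_nonneg sum_nonneg) auto
  qed
  have "(\<integral>\<alpha>. regret n s m T v (play \<alpha>) \<partial>M) \<le> (\<integral>\<alpha>. R \<alpha> \<partial>M)"
    by (rule integral_mono_AE'[OF intR le nn])
  also have "(\<integral>\<alpha>. R \<alpha> \<partial>M) = (\<Sum>t\<in>{1..<T}. \<Sum>w\<in>V. \<Sum>k\<in>{1..m}. measure M (Ev n s m T play t w k)) + C0"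
  proof -
    have sub: "Ev n s m T play t w k \<inter> space M = Ev n s m T play t w k" for t w k
      unfolding Ev_def M_def by auto
    have "(\<integral>\<alpha>. R \<alpha> \<partial>M) = (\<integral>\<alpha>. (\<Sum>t\<in>{1..<T}. \<Sum>w\<in>V. \<Sum>k\<in>{1..m}. indicator (Ev n s m T play t w k) \<alpha>) \<partial>M) + (\<integral>\<alpha>. C0 \<partial>M)"
      unfolding R_def by (rule Bochner_Integration.integral_add[OF i1 i2])
    also have "(\<integral>\<alpha>. (\<Sum>t\<in>{1..<T}. \<Sum>w\<in>V. \<Sum>k\<in>{1..m}. indicator (Ev n s m T play t w k) \<alpha> :: real) \<partial>M)
       = (\<Sum>t\<in>{1..<T}. \<Sum>w\<in>V. \<Sum>k\<in>{1..m}. (\<integral>\<alpha>. indicator (Ev n s m T play t w k) \<alpha> \<partial>M))"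
    proof -
      have iK: "integrable M (\<lambda>\<alpha>. \<Sum>k\<in>{1..m}. indicator (Ev n s m T play t w k) \<alpha> :: real)"
        if "t \<in> {1..<T}" "w \<in> V" for t w
        by (rule Bochner_Integration.integrable_sum) (use intI[OF that] in simp)
      have iW: "integrable M (\<lambda>\<alpha>. \<Sum>w\<in>V. \<Sum>k\<in>{1..m}. indicator (Ev n s m T play t w k) \<alpha> :: real)"
        if "t \<in> {1..<T}" for t
        by (rule Bochner_Integration.integrable_sum) (use iK[OF that] in simp)
      have "(\<integral>\<alpha>. (\<Sum>t\<in>{1..<T}. \<Sum>w\<in>V. \<Sum>k\<in>{1..m}. indicator (Ev n s m T play t w k) \<alpha> :: real) \<partial>M)
        = (\<Sum>t\<in>{1..<T}. (\<integral>\<alpha>. (\<Sum>w\<in>V. \<Sum>k\<in>{1..m}. indicator (Ev n s m T play t w k) \<alpha>) \<partial>M))"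
        by (rule Bochner_Integration.integral_sum) (rule iW)
      also have "\<dots> = (\<Sum>t\<in>{1..<T}. \<Sum>w\<in>V. (\<integral>\<alpha>. (\<Sum>k\<in>{1..m}. indicator (Ev n s m T play t w k) \<alpha>) \<partial>M))"
        by (intro sum.cong refl Bochner_Integration.integral_sum iK)
      also have "\<dots> = (\<Sum>t\<in>{1..<T}. \<Sum>w\<in>V. \<Sum>k\<in>{1..m}. (\<integral>\<alpha>. indicator (Ev n s m T play t w k) \<alpha> \<partial>M))"
        by (intro sum.cong refl Bochner_Integration.integral_sum) (use intI in simp)
      finally show ?thesis .
    qed
    also have "\<dots> = (\<Sum>t\<in>{1..<T}. \<Sum>w\<in>V. \<Sum>k\<in>{1..m}. measure M (Ev n s m T play t w k))"
      by (simp add: sub)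
    also have "(\<integral>\<alpha>. C0 \<partial>M) = C0" by (simp add: P.prob_space)
    finally show ?thesis .
  qed
  also have "\<dots> \<le> (\<Sum>t\<in>{1..<T}. \<Sum>w\<in>V. \<Sum>k\<in>{1..m}. b) + C0"
    using Emeas by (intro add_right_mono sum_mono) auto
  also have "\<dots> = real (T - 1) * (cV * (real m * b)) + C0" unfolding cV_def by simp
  also have "\<dots> \<le> 24 * real n * (real m)\<^sup>2 * sqrt (real T)"
  proof -
    have cV0: "0 \<le> cV" unfolding cV_def by simp
    have cVb: "cV \<le> 2 * real n * real m" unfolding cV_def V_def by (rule card_VSL_le[OF n m])
    have bb: "b = 2 * (real m * (2 + 2 * e)) * \<eta>" unfolding b_def by simp
    have aa: "a \<le> 3 * real m * sqrt (real T)" unfolding a_def using ef by simp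
    show ?thesis unfolding C0_def bb
      using arith_final[OF n m T refl ef(4) ef(5) ef(1) ef(2) aa cV0 cVb ef(6)] by linarith
  qed
  finally show ?thesis unfolding M_def .
qed

theorem theorem3p8:
  "\<exists>C::real. \<forall>(n::nat) (s::nat) (m::nat) (T::nat) (v::nat \<Rightarrow> nat \<Rightarrow> real)
      (play :: ((nat \<Rightarrow> real) \<Rightarrow> real) \<Rightarrow> nat \<Rightarrow> (nat \<Rightarrow> nat \<Rightarrow> real)).
     2 \<le> n \<longrightarrow> 1 \<le> s \<longrightarrow> 1 \<le> m \<longrightarrow> 1 \<le> T \<longrightarrow>
     (\<forall>t\<in>{1..T}. \<forall>i<n. v t i \<in> {0..1}) \<longrightarrow>
     (\<forall>t\<in>{1..T}. \<forall>\<theta>. {\<alpha> \<in> space (ftpl_D n m T). play \<alpha> t = \<theta>} \<in> sets (ftpl_D n m T)) \<longrightarrow>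
     ftpl_play n s m T v play \<longrightarrow>
     (\<integral>\<alpha>. regret n s m T v (play \<alpha>) \<partial>ftpl_D n m T) \<le> C * real n * (real m)\<^sup>2 * sqrt (real T)"
  by (intro exI[of _ 24] allI impI main_bound) auto


end
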